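(* Let $(\mathcal C,\otimes,I)$ be a symmetric closed monoidal category and $M$ a commutative monad on $\mathcal C$. For each symmetric Eilenberg--Moore $M$-monoid of the shape $\langle MA,\mu_A,m,u\rangle$, let $s=m\circ(\mathrm{id}_{MA}\otimes\eta_A): MA\otimes A\to MA$. Then $\Lambda(s): MA\to(A\Rightarrow MA)$ (i) is a morphism of symmetric Eilenberg--Moore $M$-monoids $\langle MA,\mu_A,m,u\rangle\to\langle A\Rightarrow MA,\ \Lambda(q),\ \mathsf{kcomp},\ \mathsf{kident}\rangle$, and (ii) is a split monomorphism in $\mathcal C$, i.e. there exists $r:(A\Rightarrow MA)\to MA$ with $r\circ\Lambda(s)=\mathrm{id}_{MA}$.
   Context: Symmetry $\mathsf{sym}:X\otimes Y\to Y\otimes X$; structural isomorphisms written $\cong$. Closed: $(-)\otimes B\dashv B\Rightarrow(-)$, currying $\Lambda:\mathcal C(X\otimes B,C)\cong\mathcal C(X,B\Rightarrow C)$, counit $\mathsf{app}$. $M$ has strength $\tau_{X,Y}:MX\otimes Y\to M(X\otimes Y)$ and left strength $\tau'_{X,Y}=M\mathsf{sym}\circ\tau_{Y,X}\circ\mathsf{sym}: X\otimes MY\to M(X\otimes Y)$; commutativity means $\mu\circ M\tau\circ\tau'=\mu\circ M\tau'\circ\tau$. $q=\mu_A\circ M\mathsf{app}\circ\tau: M(A\Rightarrow MA)\otimes A\to MA$. $\mathsf{kcomp}=\Lambda(w):(A\Rightarrow MA)\otimes(A\Rightarrow MA)\to(A\Rightarrow MA)$ where $w=\mu_A\circ M\mathsf{app}\circ\tau'\circ(\mathrm{id}\otimes\mathsf{app})\circ\cong:((A\Rightarrow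 MA)\otimes(A\Rightarrow MA))\otimes A\to MA$, and $\mathsf{kident}=\Lambda(\eta_A\circ\cong): I\to(A\Rightarrow MA)$ with $\cong: I\otimes A\to A$. A symmetric Eilenberg--Moore $M$-monoid is a tuple $\langle E,a: ME\to E,m: E\otimes E\to E,u: I\to E\rangle$ with $\langle E,a\rangle$ an Eilenberg--Moore $M$-algebra, $\langle E,m,u\rangle$ a monoid, and $a\circ Mm\circ\mu_{E\otimes E}\circ M\tau'_{E,E}\circ\tau_{E,ME}=m\circ(a\otimes a)$. A morphism of such is a $\mathcal C$-morphism that is both an $M$-algebra morphism and a monoid morphism. *)

theory Defs
  imports Main
begin

text \<open>A category is given by a set of arrows with domain/codomain maps to a
type of objects, composition (written cmp g f for g after f) and identities.\<close>

record ('o, 'm) smcc =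
  Ob    :: "'o set"
  Ar    :: "'m set"
  dm    :: "'m \<Rightarrow> 'o"
  cd    :: "'m \<Rightarrow> 'o"
  cmp   :: "'m \<Rightarrow> 'm \<Rightarrow> 'm"
  idm   :: "'o \<Rightarrow> 'm"
  tob   :: "'o \<Rightarrow> 'o \<Rightarrow> 'o"
  tar   :: "'m \<Rightarrow> 'm \<Rightarrow> 'm"
  unt   :: "'o"
  assoc :: "'o \<Rightarrow> 'o \<Rightarrow> 'o \<Rightarrow> 'm"
  lunit :: "'o \<Rightarrow> 'm"
  runit :: "'o \<Rightarrow> 'm"
  symm  :: "'o \<Rightarrow> 'o \<Rightarrow> 'm"
  expo  :: "'o \<Rightarrow> 'o \<Rightarrow> 'o"
  appl  :: "'o \<Rightarrow> 'o \<Rightarrow> 'm"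
  curr  :: "'o \<Rightarrow> 'o \<Rightarrow> 'o \<Rightarrow> 'm \<Rightarrow> 'm"

definition hom :: "('o, 'm) smcc \<Rightarrow> 'o \<Rightarrow> 'o \<Rightarrow> 'm set" where
  "hom C X Y = {f \<in> Ar C. dm C f = X \<and> cd C f = Y}"

definition is_iso :: "('o, 'm) smcc \<Rightarrow> 'm \<Rightarrow> 'o \<Rightarrow> 'o \<Rightarrow> bool" where
  "is_iso C f X Y \<longleftrightarrow> f \<in> hom C X Y \<and>
     (\<exists>g \<in> hom C Y X. cmp C g f = idm C X \<and> cmp C f g = idm C Y)"

definition category :: "('o, 'm) smcc \<Rightarrow> bool" where
  "category C \<longleftrightarrow>
     (\<forall>f \<in> Ar C. dm C f \<in> Ob C \<and> cd C f \<in> Ob C) \<and>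
     (\<forall>X \<in> Ob C. idm C X \<in> hom C X X) \<and>
     (\<forall>X \<in> Ob C. \<forall>Y \<in> Ob C. \<forall>Z \<in> Ob C. \<forall>f \<in> hom C X Y. \<forall>g \<in> hom C Y Z.
        cmp C g f \<in> hom C X Z) \<and>
     (\<forall>f \<in> Ar C. cmp C (idm C (cd C f)) f = f \<and> cmp C f (idm C (dm C f)) = f) \<and>
     (\<forall>f \<in> Ar C. \<forall>g \<in> Ar C. \<forall>h \<in> Ar C. cd C f = dm C g \<longrightarrow> cd C g = dm C h \<longrightarrow>
        cmp C h (cmp C g f) = cmp C (cmp C h g) f)"

definition monoidal :: "('o, 'm) smcc \<Rightarrow> bool" where
  "monoidal C \<longleftrightarrow> category C \<and>
     unt C \<in> Ob C \<and>
     (\<forall>X \<in> Ob C. \<forall>Y \<in> Ob C. tob C X Y \<in> Ob C) \<and>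
     \<comment> \<open>tensor is a bifunctor\<close>
     (\<forall>X \<in> Ob C. \<forall>X' \<in> Ob C. \<forall>Y \<in> Ob C. \<forall>Y' \<in> Ob C. \<forall>f \<in> hom C X Y. \<forall>g \<in> hom C X' Y'.
        tar C f g \<in> hom C (tob C X X') (tob C Y Y')) \<and>
     (\<forall>X \<in> Ob C. \<forall>Y \<in> Ob C. tar C (idm C X) (idm C Y) = idm C (tob C X Y)) \<and>
     (\<forall>f \<in> Ar C. \<forall>g \<in> Ar C. \<forall>f' \<in> Ar C. \<forall>g' \<in> Ar C. cd C f = dm C g \<longrightarrow> cd C f' = dm C g' \<longrightarrow>
        tar C (cmp C g f) (cmp C g' f') = cmp C (tar C g g') (tar C f f')) \<and>
     \<comment> \<open>structural isomorphisms\<close>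
     (\<forall>X \<in> Ob C. \<forall>Y \<in> Ob C. \<forall>Z \<in> Ob C.
        is_iso C (assoc C X Y Z) (tob C (tob C X Y) Z) (tob C X (tob C Y Z))) \<and>
     (\<forall>X \<in> Ob C. is_iso C (lunit C X) (tob C (unt C) X) X) \<and>
     (\<forall>X \<in> Ob C. is_iso C (runit C X) (tob C X (unt C)) X) \<and>
     \<comment> \<open>naturality\<close>
     (\<forall>X \<in> Ob C. \<forall>X' \<in> Ob C. \<forall>Y \<in> Ob C. \<forall>Y' \<in> Ob C. \<forall>Z \<in> Ob C. \<forall>Z' \<in> Ob C.
      \<forall>f \<in> hom C X X'. \<forall>g \<in> hom C Y Y'. \<forall>h \<in> hom C Z Z'.
        cmp C (assoc C X' Y' Z') (tar C (tar C f g) h) =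
        cmp C (tar C f (tar C g h)) (assoc C X Y Z)) \<and>
     (\<forall>X \<in> Ob C. \<forall>Y \<in> Ob C. \<forall>f \<in> hom C X Y.
        cmp C (lunit C Y) (tar C (idm C (unt C)) f) = cmp C f (lunit C X) \<and>
        cmp C (runit C Y) (tar C f (idm C (unt C))) = cmp C f (runit C X)) \<and>
     \<comment> \<open>pentagon and triangle\<close>
     (\<forall>W \<in> Ob C. \<forall>X \<in> Ob C. \<forall>Y \<in> Ob C. \<forall>Z \<in> Ob C.
        cmp C (assoc C W X (tob C Y Z)) (assoc C (tob C W X) Y Z) =
        cmp C (tar C (idm C W) (assoc C X Y Z))
          (cmp C (assoc C W (tob C X Y) Z) (tar C (assoc C W X Y) (idm C Z)))) \<and>
     (\<forall>X \<in> Ob C. \<forall>Y \<in> Ob C.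
        cmp C (tar C (idm C X) (lunit C Y)) (assoc C X (unt C) Y) =
        tar C (runit C X) (idm C Y))"

definition symmetric_monoidal :: "('o, 'm) smcc \<Rightarrow> bool" where
  "symmetric_monoidal C \<longleftrightarrow> monoidal C \<and>
     (\<forall>X \<in> Ob C. \<forall>Y \<in> Ob C. symm C X Y \<in> hom C (tob C X Y) (tob C Y X)) \<and>
     (\<forall>X \<in> Ob C. \<forall>X' \<in> Ob C. \<forall>Y \<in> Ob C. \<forall>Y' \<in> Ob C. \<forall>f \<in> hom C X X'. \<forall>g \<in> hom C Y Y'.
        cmp C (symm C X' Y') (tar C f g) = cmp C (tar C g f) (symm C X Y)) \<and>
     (\<forall>X \<in> Ob C. \<forall>Y \<in> Ob C. cmp C (symm C Y X) (symm C X Y) = idm C (tob C X Y)) \<and>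
     (\<forall>X \<in> Ob C. \<forall>Y \<in> Ob C. \<forall>Z \<in> Ob C.
        cmp C (assoc C Y Z X) (cmp C (symm C X (tob C Y Z)) (assoc C X Y Z)) =
        cmp C (tar C (idm C Y) (symm C X Z))
          (cmp C (assoc C Y X Z) (tar C (symm C X Y) (idm C Z))))"

text \<open>Closed: (-) \<otimes> B is left adjoint to B \<Rightarrow> (-), presented by the counit
appl B C : (B \<Rightarrow> C) \<otimes> B \<rightarrow> C and currying curr X B C (a bijection
hom (X \<otimes> B) C \<cong> hom X (B \<Rightarrow> C) inverse to g \<mapsto> appl \<circ> (g \<otimes> id)).\<close>

definition symmetric_closed_monoidal :: "('o, 'm) smcc \<Rightarrow> bool" where
  "symmetric_closed_monoidal C \<longleftrightarrow> symmetric_monoidal C \<and>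
     (\<forall>B \<in> Ob C. \<forall>Z \<in> Ob C. expo C B Z \<in> Ob C \<and>
        appl C B Z \<in> hom C (tob C (expo C B Z) B) Z) \<and>
     (\<forall>X \<in> Ob C. \<forall>B \<in> Ob C. \<forall>Z \<in> Ob C. \<forall>f \<in> hom C (tob C X B) Z.
        curr C X B Z f \<in> hom C X (expo C B Z) \<and>
        cmp C (appl C B Z) (tar C (curr C X B Z f) (idm C B)) = f) \<and>
     (\<forall>X \<in> Ob C. \<forall>B \<in> Ob C. \<forall>Z \<in> Ob C. \<forall>g \<in> hom C X (expo C B Z).
        curr C X B Z (cmp C (appl C B Z) (tar C g (idm C B))) = g)"

record ('o, 'm) smonad =
  Mo  :: "'o \<Rightarrow> 'o"
  Mm  :: "'m \<Rightarrow> 'm"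
  eta :: "'o \<Rightarrow> 'm"
  mu  :: "'o \<Rightarrow> 'm"
  tau :: "'o \<Rightarrow> 'o \<Rightarrow> 'm"

definition monad :: "('o, 'm) smcc \<Rightarrow> ('o, 'm) smonad \<Rightarrow> bool" where
  "monad C M \<longleftrightarrow>
     (\<forall>X \<in> Ob C. Mo M X \<in> Ob C) \<and>
     (\<forall>X \<in> Ob C. \<forall>Y \<in> Ob C. \<forall>f \<in> hom C X Y. Mm M f \<in> hom C (Mo M X) (Mo M Y)) \<and>
     (\<forall>X \<in> Ob C. Mm M (idm C X) = idm C (Mo M X)) \<and>
     (\<forall>f \<in> Ar C. \<forall>g \<in> Ar C. cd C f = dm C g \<longrightarrow> Mm M (cmp C g f) = cmp C (Mm M g) (Mm M f)) \<and>
     (\<forall>X \<in> Ob C. eta M X \<in> hom C X (Mo M X) \<and> mu M X \<in> hom C (Mo M (Mo M X)) (Mo M X)) \<and>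
     (\<forall>X \<in> Ob C. \<forall>Y \<in> Ob C. \<forall>f \<in> hom C X Y.
        cmp C (eta M Y) f = cmp C (Mm M f) (eta M X) \<and>
        cmp C (mu M Y) (Mm M (Mm M f)) = cmp C (Mm M f) (mu M X)) \<and>
     (\<forall>X \<in> Ob C.
        cmp C (mu M X) (Mm M (mu M X)) = cmp C (mu M X) (mu M (Mo M X)) \<and>
        cmp C (mu M X) (eta M (Mo M X)) = idm C (Mo M X) \<and>
        cmp C (mu M X) (Mm M (eta M X)) = idm C (Mo M X))"

definition strong_monad :: "('o, 'm) smcc \<Rightarrow> ('o, 'm) smonad \<Rightarrow> bool" where
  "strong_monad C M \<longleftrightarrow> monad C M \<and>
     (\<forall>X \<in> Ob C. \<forall>Y \<in> Ob C. tau M X Y \<in> hom C (tob C (Mo M X) Y) (Mo M (tob C X Y))) \<and>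
     (\<forall>X \<in> Ob C. \<forall>X' \<in> Ob C. \<forall>Y \<in> Ob C. \<forall>Y' \<in> Ob C. \<forall>f \<in> hom C X X'. \<forall>g \<in> hom C Y Y'.
        cmp C (tau M X' Y') (tar C (Mm M f) g) = cmp C (Mm M (tar C f g)) (tau M X Y)) \<and>
     (\<forall>X \<in> Ob C. cmp C (Mm M (runit C X)) (tau M X (unt C)) = runit C (Mo M X)) \<and>
     (\<forall>X \<in> Ob C. \<forall>Y \<in> Ob C. \<forall>Z \<in> Ob C.
        cmp C (tau M X (tob C Y Z)) (assoc C (Mo M X) Y Z) =
        cmp C (Mm M (assoc C X Y Z)) (cmp C (tau M (tob C X Y) Z) (tar C (tau M X Y) (idm C Z)))) \<and>
     (\<forall>X \<in> Ob C. \<forall>Y \<in> Ob C.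
        cmp C (tau M X Y) (tar C (eta M X) (idm C Y)) = eta M (tob C X Y) \<and>
        cmp C (tau M X Y) (tar C (mu M X) (idm C Y)) =
        cmp C (mu M (tob C X Y)) (cmp C (Mm M (tau M X Y)) (tau M (Mo M X) Y)))"

definition ltau :: "('o, 'm) smcc \<Rightarrow> ('o, 'm) smonad \<Rightarrow> 'o \<Rightarrow> 'o \<Rightarrow> 'm" where
  "ltau C M X Y = cmp C (Mm M (symm C Y X)) (cmp C (tau M Y X) (symm C X (Mo M Y)))"

definition commutative_monad :: "('o, 'm) smcc \<Rightarrow> ('o, 'm) smonad \<Rightarrow> bool" where
  "commutative_monad C M \<longleftrightarrow> strong_monad C M \<and>
     (\<forall>X \<in> Ob C. \<forall>Y \<in> Ob C.
        cmp C (mu M (tob C X Y)) (cmp C (Mm M (tau M X Y)) (ltau C M (Mo M X) Y)) =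
        cmp C (mu M (tob C X Y)) (cmp C (Mm M (ltau C M X Y)) (tau M X (Mo M Y))))"

definition sym_em_monoid ::
  "('o, 'm) smcc \<Rightarrow> ('o, 'm) smonad \<Rightarrow> 'o \<Rightarrow> 'm \<Rightarrow> 'm \<Rightarrow> 'm \<Rightarrow> bool" where
  "sym_em_monoid C M E a m u \<longleftrightarrow>
     E \<in> Ob C \<and>
     \<comment> \<open>Eilenberg--Moore algebra\<close>
     a \<in> hom C (Mo M E) E \<and>
     cmp C a (eta M E) = idm C E \<and>
     cmp C a (Mm M a) = cmp C a (mu M E) \<and>
     \<comment> \<open>monoid\<close>
     m \<in> hom C (tob C E E) E \<and> u \<in> hom C (unt C) E \<and>
     cmp C m (tar C m (idm C E)) = cmp C m (cmp C (tar C (idm C E) m) (assoc C E E E)) \<and>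
     cmp C m (tar C u (idm C E)) = lunit C E \<and>
     cmp C m (tar C (idm C E) u) = runit C E \<and>
     \<comment> \<open>compatibility\<close>
     cmp C a (cmp C (Mm M m) (cmp C (mu M (tob C E E))
        (cmp C (Mm M (ltau C M E E)) (tau M E (Mo M E))))) =
     cmp C m (tar C a a)"

definition sym_em_monoid_hom ::
  "('o, 'm) smcc \<Rightarrow> ('o, 'm) smonad \<Rightarrow> 'o \<Rightarrow> 'm \<Rightarrow> 'm \<Rightarrow> 'm \<Rightarrow>
     'o \<Rightarrow> 'm \<Rightarrow> 'm \<Rightarrow> 'm \<Rightarrow> 'm \<Rightarrow> bool" where
  "sym_em_monoid_hom C M E a m u E' a' m' u' f \<longleftrightarrow>
     sym_em_monoid C M E a m u \<and> sym_em_monoid C M E' a' m' u' \<and>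
     f \<in> hom C E E' \<and>
     cmp C f a = cmp C a' (Mm M f) \<and>
     cmp C f m = cmp C m' (tar C f f) \<and>
     cmp C f u = u'"

abbreviation KA :: "('o, 'm) smcc \<Rightarrow> ('o, 'm) smonad \<Rightarrow> 'o \<Rightarrow> 'o" where
  "KA C M A \<equiv> expo C A (Mo M A)"

definition qmap :: "('o, 'm) smcc \<Rightarrow> ('o, 'm) smonad \<Rightarrow> 'o \<Rightarrow> 'm" where
  "qmap C M A = cmp C (mu M A) (cmp C (Mm M (appl C A (Mo M A))) (tau M (KA C M A) A))"

definition wmap :: "('o, 'm) smcc \<Rightarrow> ('o, 'm) smonad \<Rightarrow> 'o \<Rightarrow> 'm" where
  "wmap C M A = cmp C (mu M A) (cmp C (Mm M (appl C A (Mo M A)))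
     (cmp C (ltau C M (KA C M A) A)
       (cmp C (tar C (idm C (KA C M A)) (appl C A (Mo M A)))
          (assoc C (KA C M A) (KA C M A) A))))"

definition kcomp :: "('o, 'm) smcc \<Rightarrow> ('o, 'm) smonad \<Rightarrow> 'o \<Rightarrow> 'm" where
  "kcomp C M A = curr C (tob C (KA C M A) (KA C M A)) A (Mo M A) (wmap C M A)"

definition kident :: "('o, 'm) smcc \<Rightarrow> ('o, 'm) smonad \<Rightarrow> 'o \<Rightarrow> 'm" where
  "kident C M A = curr C (unt C) A (Mo M A) (cmp C (eta M A) (lunit C A))"

end

theory Submission
  imports Defs
begin


definition ainv where
  "ainv C X Y Z = (SOME g. g \<in> hom C (tob C X (tob C Y Z)) (tob C (tob C X Y) Z) \<and>
      cmp C g (assoc C X Y Z) = idm C (tob C (tob C X Y) Z) \<and> cmp C (assoc C X Y Z) g = idm C (tob C X (tob C Y Z)))"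
definition linv where
  "linv C X = (SOME g. g \<in> hom C X (tob C (unt C) X) \<and>
      cmp C g (lunit C X) = idm C (tob C (unt C) X) \<and> cmp C (lunit C X) g = idm C X)"
definition rinv where
  "rinv C X = (SOME g. g \<in> hom C X (tob C X (unt C)) \<and>
      cmp C g (runit C X) = idm C (tob C X (unt C)) \<and> cmp C (runit C X) g = idm C X)"

locale SMC =
  fixes C :: "('o, 'm) smcc" and M :: "('o, 'm) smonad"
  assumes scm: "symmetric_closed_monoidal C"
    and cmm: "commutative_monad C M"
begin

abbreviation cp (infixr "\<cdot>" 55) where "g \<cdot> f \<equiv> cmp C g f"
abbreviation tr (infixl "\<otimes>" 65) where "f \<otimes> g \<equiv> tar C f g"
abbreviation tb (infixl "\<odot>" 65) where "X \<odot> Y \<equiv> tob C X Y"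
abbreviation "ide X \<equiv> idm C X"
abbreviation "I \<equiv> unt C"
abbreviation "MO X \<equiv> Mo M X"
abbreviation "MF f \<equiv> Mm M f"
abbreviation "\<eta> X \<equiv> eta M X"
abbreviation "\<mu> X \<equiv> mu M X"
abbreviation "\<tau> X Y \<equiv> tau M X Y"
abbreviation "\<tau>' X Y \<equiv> ltau C M X Y"
abbreviation "\<alpha> X Y Z \<equiv> assoc C X Y Z"
abbreviation "\<alpha>' X Y Z \<equiv> ainv C X Y Z"
abbreviation "lu X \<equiv> lunit C X"
abbreviation "ru X \<equiv> runit C X"
abbreviation "lu' X \<equiv> linv C X"
abbreviation "ru' X \<equiv> rinv C X"
abbreviation "\<sigma> X Y \<equiv> symm C X Y"
abbreviation "ev B Z \<equiv> appl C B Z"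
abbreviation "\<Lambda> X B Z f \<equiv> curr C X B Z f"
abbreviation "Arr \<equiv> Ar C"
abbreviation "Obj \<equiv> Ob C"
abbreviation "src f \<equiv> dm C f"
abbreviation "trg f \<equiv> cd C f"

lemma smon: "symmetric_monoidal C" using scm unfolding symmetric_closed_monoidal_def by (elim conjE) assumption
lemma mon: "monoidal C" using smon unfolding symmetric_monoidal_def by (elim conjE) assumption
lemma cat: "category C" using mon unfolding monoidal_def by (elim conjE) assumption
lemma smnd: "strong_monad C M" using cmm unfolding commutative_monad_def by (elim conjE) assumption
lemma mnd: "monad C M" using smnd unfolding strong_monad_def by (elim conjE) assumption

lemma cat_1: "(\<forall>f \<in> Ar C. dm C f \<in> Ob C \<and> cd C f \<in> Ob C)"
  using cat unfolding category_def by (elim conjE) assumption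

lemma cat_2: "(\<forall>X \<in> Ob C. idm C X \<in> hom C X X)"
  using cat unfolding category_def by (elim conjE) assumption

lemma cat_3: "(\<forall>X \<in> Ob C. \<forall>Y \<in> Ob C. \<forall>Z \<in> Ob C. \<forall>f \<in> hom C X Y. \<forall>g \<in> hom C Y Z.
        cmp C g f \<in> hom C X Z)"
  using cat unfolding category_def by (elim conjE) assumption

lemma cat_4: "(\<forall>f \<in> Ar C. cmp C (idm C (cd C f)) f = f \<and> cmp C f (idm C (dm C f)) = f)"
  using cat unfolding category_def by (elim conjE) assumption

lemma cat_5: "(\<forall>f \<in> Ar C. \<forall>g \<in> Ar C. \<forall>h \<in> Ar C. cd C f = dm C g \<longrightarrow> cd C g = dm C h \<longrightarrow>
        cmp C h (cmp C g f) = cmp C (cmp C h g) f)"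
  using cat unfolding category_def by (elim conjE) assumption

lemma mon_1: "category C"
  using mon unfolding monoidal_def by (elim conjE) assumption

lemma mon_2: "unt C \<in> Ob C"
  using mon unfolding monoidal_def by (elim conjE) assumption

lemma mon_3: "(\<forall>X \<in> Ob C. \<forall>Y \<in> Ob C. tob C X Y \<in> Ob C)"
  using mon unfolding monoidal_def by (elim conjE) assumption

lemma mon_4: "(\<forall>X \<in> Ob C. \<forall>X' \<in> Ob C. \<forall>Y \<in> Ob C. \<forall>Y' \<in> Ob C. \<forall>f \<in> hom C X Y. \<forall>g \<in> hom C X' Y'.
        tar C f g \<in> hom C (tob C X X') (tob C Y Y'))"
  using mon unfolding monoidal_def by (elim conjE) assumption

lemma mon_5: "(\<forall>X \<in> Ob C. \<forall>Y \<in> Ob C. tar C (idm C X) (idm C Y) = idm C (tob C X Y))"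
  using mon unfolding monoidal_def by (elim conjE) assumption

lemma mon_6: "(\<forall>f \<in> Ar C. \<forall>g \<in> Ar C. \<forall>f' \<in> Ar C. \<forall>g' \<in> Ar C. cd C f = dm C g \<longrightarrow> cd C f' = dm C g' \<longrightarrow>
        tar C (cmp C g f) (cmp C g' f') = cmp C (tar C g g') (tar C f f'))"
  using mon unfolding monoidal_def by (elim conjE) assumption

lemma mon_7: "(\<forall>X \<in> Ob C. \<forall>Y \<in> Ob C. \<forall>Z \<in> Ob C.
        is_iso C (assoc C X Y Z) (tob C (tob C X Y) Z) (tob C X (tob C Y Z)))"
  using mon unfolding monoidal_def by (elim conjE) assumption

lemma mon_8: "(\<forall>X \<in> Ob C. is_iso C (lunit C X) (tob C (unt C) X) X)"
  using mon unfolding monoidal_def by (elim conjE) assumption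

lemma mon_9: "(\<forall>X \<in> Ob C. is_iso C (runit C X) (tob C X (unt C)) X)"
  using mon unfolding monoidal_def by (elim conjE) assumption

lemma mon_10: "(\<forall>X \<in> Ob C. \<forall>X' \<in> Ob C. \<forall>Y \<in> Ob C. \<forall>Y' \<in> Ob C. \<forall>Z \<in> Ob C. \<forall>Z' \<in> Ob C.
      \<forall>f \<in> hom C X X'. \<forall>g \<in> hom C Y Y'. \<forall>h \<in> hom C Z Z'.
        cmp C (assoc C X' Y' Z') (tar C (tar C f g) h) =
        cmp C (tar C f (tar C g h)) (assoc C X Y Z))"
  using mon unfolding monoidal_def by (elim conjE) assumption

lemma mon_11: "(\<forall>X \<in> Ob C. \<forall>Y \<in> Ob C. \<forall>f \<in> hom C X Y.
        cmp C (lunit C Y) (tar C (idm C (unt C)) f) = cmp C f (lunit C X) \<and>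
        cmp C (runit C Y) (tar C f (idm C (unt C))) = cmp C f (runit C X))"
  using mon unfolding monoidal_def by (elim conjE) assumption

lemma mon_12: "(\<forall>W \<in> Ob C. \<forall>X \<in> Ob C. \<forall>Y \<in> Ob C. \<forall>Z \<in> Ob C.
        cmp C (assoc C W X (tob C Y Z)) (assoc C (tob C W X) Y Z) =
        cmp C (tar C (idm C W) (assoc C X Y Z))
          (cmp C (assoc C W (tob C X Y) Z) (tar C (assoc C W X Y) (idm C Z))))"
  using mon unfolding monoidal_def by (elim conjE) assumption

lemma mon_13: "(\<forall>X \<in> Ob C. \<forall>Y \<in> Ob C.
        cmp C (tar C (idm C X) (lunit C Y)) (assoc C X (unt C) Y) =
        tar C (runit C X) (idm C Y))"
  using mon unfolding monoidal_def by (elim conjE) assumption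

lemma smon_1: "monoidal C"
  using smon unfolding symmetric_monoidal_def by (elim conjE) assumption

lemma smon_2: "(\<forall>X \<in> Ob C. \<forall>Y \<in> Ob C. symm C X Y \<in> hom C (tob C X Y) (tob C Y X))"
  using smon unfolding symmetric_monoidal_def by (elim conjE) assumption

lemma smon_3: "(\<forall>X \<in> Ob C. \<forall>X' \<in> Ob C. \<forall>Y \<in> Ob C. \<forall>Y' \<in> Ob C. \<forall>f \<in> hom C X X'. \<forall>g \<in> hom C Y Y'.
        cmp C (symm C X' Y') (tar C f g) = cmp C (tar C g f) (symm C X Y))"
  using smon unfolding symmetric_monoidal_def by (elim conjE) assumption

lemma smon_4: "(\<forall>X \<in> Ob C. \<forall>Y \<in> Ob C. cmp C (symm C Y X) (symm C X Y) = idm C (tob C X Y))"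
  using smon unfolding symmetric_monoidal_def by (elim conjE) assumption

lemma smon_5: "(\<forall>X \<in> Ob C. \<forall>Y \<in> Ob C. \<forall>Z \<in> Ob C.
        cmp C (assoc C Y Z X) (cmp C (symm C X (tob C Y Z)) (assoc C X Y Z)) =
        cmp C (tar C (idm C Y) (symm C X Z))
          (cmp C (assoc C Y X Z) (tar C (symm C X Y) (idm C Z))))"
  using smon unfolding symmetric_monoidal_def by (elim conjE) assumption

lemma scm_1: "symmetric_monoidal C"
  using scm unfolding symmetric_closed_monoidal_def by (elim conjE) assumption

lemma scm_2: "(\<forall>B \<in> Ob C. \<forall>Z \<in> Ob C. expo C B Z \<in> Ob C \<and>
        appl C B Z \<in> hom C (tob C (expo C B Z) B) Z)"
  using scm unfolding symmetric_closed_monoidal_def by (elim conjE) assumption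

lemma scm_3: "(\<forall>X \<in> Ob C. \<forall>B \<in> Ob C. \<forall>Z \<in> Ob C. \<forall>f \<in> hom C (tob C X B) Z.
        curr C X B Z f \<in> hom C X (expo C B Z) \<and>
        cmp C (appl C B Z) (tar C (curr C X B Z f) (idm C B)) = f)"
  using scm unfolding symmetric_closed_monoidal_def by (elim conjE) assumption

lemma scm_4: "(\<forall>X \<in> Ob C. \<forall>B \<in> Ob C. \<forall>Z \<in> Ob C. \<forall>g \<in> hom C X (expo C B Z).
        curr C X B Z (cmp C (appl C B Z) (tar C g (idm C B))) = g)"
  using scm unfolding symmetric_closed_monoidal_def by (elim conjE) assumption

lemma mnd_1: "(\<forall>X \<in> Ob C. Mo M X \<in> Ob C)"
  using mnd unfolding monad_def by (elim conjE) assumption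

lemma mnd_2: "(\<forall>X \<in> Ob C. \<forall>Y \<in> Ob C. \<forall>f \<in> hom C X Y. Mm M f \<in> hom C (Mo M X) (Mo M Y))"
  using mnd unfolding monad_def by (elim conjE) assumption

lemma mnd_3: "(\<forall>X \<in> Ob C. Mm M (idm C X) = idm C (Mo M X))"
  using mnd unfolding monad_def by (elim conjE) assumption

lemma mnd_4: "(\<forall>f \<in> Ar C. \<forall>g \<in> Ar C. cd C f = dm C g \<longrightarrow> Mm M (cmp C g f) = cmp C (Mm M g) (Mm M f))"
  using mnd unfolding monad_def by (elim conjE) assumption

lemma mnd_5: "(\<forall>X \<in> Ob C. eta M X \<in> hom C X (Mo M X) \<and> mu M X \<in> hom C (Mo M (Mo M X)) (Mo M X))"
  using mnd unfolding monad_def by (elim conjE) assumption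

lemma mnd_6: "(\<forall>X \<in> Ob C. \<forall>Y \<in> Ob C. \<forall>f \<in> hom C X Y.
        cmp C (eta M Y) f = cmp C (Mm M f) (eta M X) \<and>
        cmp C (mu M Y) (Mm M (Mm M f)) = cmp C (Mm M f) (mu M X))"
  using mnd unfolding monad_def by (elim conjE) assumption

lemma mnd_7: "(\<forall>X \<in> Ob C.
        cmp C (mu M X) (Mm M (mu M X)) = cmp C (mu M X) (mu M (Mo M X)) \<and>
        cmp C (mu M X) (eta M (Mo M X)) = idm C (Mo M X) \<and>
        cmp C (mu M X) (Mm M (eta M X)) = idm C (Mo M X))"
  using mnd unfolding monad_def by (elim conjE) assumption

lemma smnd_1: "monad C M"
  using smnd unfolding strong_monad_def by (elim conjE) assumption

lemma smnd_2: "(\<forall>X \<in> Ob C. \<forall>Y \<in> Ob C. tau M X Y \<in> hom C (tob C (Mo M X) Y) (Mo M (tob C X Y)))"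
  using smnd unfolding strong_monad_def by (elim conjE) assumption

lemma smnd_3: "(\<forall>X \<in> Ob C. \<forall>X' \<in> Ob C. \<forall>Y \<in> Ob C. \<forall>Y' \<in> Ob C. \<forall>f \<in> hom C X X'. \<forall>g \<in> hom C Y Y'.
        cmp C (tau M X' Y') (tar C (Mm M f) g) = cmp C (Mm M (tar C f g)) (tau M X Y))"
  using smnd unfolding strong_monad_def by (elim conjE) assumption

lemma smnd_4: "(\<forall>X \<in> Ob C. cmp C (Mm M (runit C X)) (tau M X (unt C)) = runit C (Mo M X))"
  using smnd unfolding strong_monad_def by (elim conjE) assumption

lemma smnd_5: "(\<forall>X \<in> Ob C. \<forall>Y \<in> Ob C. \<forall>Z \<in> Ob C.
        cmp C (tau M X (tob C Y Z)) (assoc C (Mo M X) Y Z) =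
        cmp C (Mm M (assoc C X Y Z)) (cmp C (tau M (tob C X Y) Z) (tar C (tau M X Y) (idm C Z))))"
  using smnd unfolding strong_monad_def by (elim conjE) assumption

lemma smnd_6: "(\<forall>X \<in> Ob C. \<forall>Y \<in> Ob C.
        cmp C (tau M X Y) (tar C (eta M X) (idm C Y)) = eta M (tob C X Y) \<and>
        cmp C (tau M X Y) (tar C (mu M X) (idm C Y)) =
        cmp C (mu M (tob C X Y)) (cmp C (Mm M (tau M X Y)) (tau M (Mo M X) Y)))"
  using smnd unfolding strong_monad_def by (elim conjE) assumption

lemma cmm_1: "strong_monad C M"
  using cmm unfolding commutative_monad_def by (elim conjE) assumption

lemma cmm_2: "(\<forall>X \<in> Ob C. \<forall>Y \<in> Ob C.
        cmp C (mu M (tob C X Y)) (cmp C (Mm M (tau M X Y)) (ltau C M (Mo M X) Y)) =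
        cmp C (mu M (tob C X Y)) (cmp C (Mm M (ltau C M X Y)) (tau M X (Mo M Y))))"
  using cmm unfolding commutative_monad_def by (elim conjE) assumption


lemma hom_iff: "f \<in> hom C X Y \<longleftrightarrow> f \<in> Arr \<and> src f = X \<and> trg f = Y" by (auto simp: hom_def)
lemma homI: "f \<in> Arr \<Longrightarrow> f \<in> hom C (src f) (trg f)" by (simp add: hom_def)

lemma dm_ob[simp]: "f \<in> Arr \<Longrightarrow> src f \<in> Obj" using cat_1 by blast
lemma cd_ob[simp]: "f \<in> Arr \<Longrightarrow> trg f \<in> Obj" using cat_1 by blast

lemma idm_ty[simp]: "X \<in> Obj \<Longrightarrow> ide X \<in> Arr" "X \<in> Obj \<Longrightarrow> src (ide X) = X" "X \<in> Obj \<Longrightarrow> trg (ide X) = X"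
  using cat_2 unfolding hom_iff by auto

lemma cmp_ty[simp]:
  assumes "f \<in> Arr" "g \<in> Arr" "trg f = src g"
  shows "g \<cdot> f \<in> Arr" "src (g \<cdot> f) = src f" "trg (g \<cdot> f) = trg g"
proof -
  have "g \<cdot> f \<in> hom C (src f) (trg g)"
    by (rule cat_3[rule_format, of "src f" "trg f" "trg g"]) (use assms in \<open>auto simp: hom_iff\<close>)
  then show "g \<cdot> f \<in> Arr" "src (g \<cdot> f) = src f" "trg (g \<cdot> f) = trg g" by (auto simp: hom_def)
qed

lemma cmp_assoc[simp]:
  "f \<in> Arr \<Longrightarrow> g \<in> Arr \<Longrightarrow> h \<in> Arr \<Longrightarrow> trg f = src g \<Longrightarrow> trg g = src h \<Longrightarrow> (h \<cdot> g) \<cdot> f = h \<cdot> (g \<cdot> f)"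
  by (rule cat_5[rule_format, symmetric]) auto

lemma id_l[simp]: "f \<in> Arr \<Longrightarrow> trg f = Y \<Longrightarrow> ide Y \<cdot> f = f"
  using cat_4[rule_format, of f] by simp
lemma id_r[simp]: "f \<in> Arr \<Longrightarrow> src f = X \<Longrightarrow> f \<cdot> ide X = f"
  using cat_4[rule_format, of f] by simp

lemma ob_unt[simp]: "I \<in> Obj" by (rule mon_2)
lemma ob_tob[simp]: "X \<in> Obj \<Longrightarrow> Y \<in> Obj \<Longrightarrow> X \<odot> Y \<in> Obj" by (rule mon_3[rule_format])

lemma tar_ty[simp]:
  assumes "f \<in> Arr" "g \<in> Arr"
  shows "f \<otimes> g \<in> Arr" "src (f \<otimes> g) = src f \<odot> src g" "trg (f \<otimes> g) = trg f \<odot> trg g"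
proof -
  have "f \<otimes> g \<in> hom C (src f \<odot> src g) (trg f \<odot> trg g)"
    by (rule mon_4[rule_format, of "src f" "src g" "trg f" "trg g"]) (use assms in \<open>auto simp: hom_iff\<close>)
  then show "f \<otimes> g \<in> Arr" "src (f \<otimes> g) = src f \<odot> src g" "trg (f \<otimes> g) = trg f \<odot> trg g" by (auto simp: hom_def)
qed

lemma tar_id[simp]: "X \<in> Obj \<Longrightarrow> Y \<in> Obj \<Longrightarrow> ide X \<otimes> ide Y = ide (X \<odot> Y)"
  by (rule mon_5[rule_format])

lemma tar_cmp: "f \<in> Arr \<Longrightarrow> g \<in> Arr \<Longrightarrow> f' \<in> Arr \<Longrightarrow> g' \<in> Arr \<Longrightarrow> trg f = src g \<Longrightarrow> trg f' = src g' \<Longrightarrow>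
   (g \<cdot> f) \<otimes> (g' \<cdot> f') = (g \<otimes> g') \<cdot> (f \<otimes> f')"
  by (rule mon_6[rule_format])

lemma iso_some: assumes "is_iso C f X Y"
  shows "(\<lambda>g. g \<in> hom C Y X \<and> g \<cdot> f = ide X \<and> f \<cdot> g = ide Y) (SOME g. g \<in> hom C Y X \<and> g \<cdot> f = ide X \<and> f \<cdot> g = ide Y)"
proof -
  from assms obtain g where "g \<in> hom C Y X \<and> g \<cdot> f = ide X \<and> f \<cdot> g = ide Y" unfolding is_iso_def by blast
  then show ?thesis by (rule someI[where P="\<lambda>g. g \<in> hom C Y X \<and> g \<cdot> f = ide X \<and> f \<cdot> g = ide Y"])
qed

lemma cancel_tail: assumes "a \<cdot> b = ide X" "a \<in> Arr" "b \<in> Arr" "h \<in> Arr" "trg b = src a" "trg h = src b" "X = src b"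
  shows "a \<cdot> (b \<cdot> h) = h"
proof -
  have "a \<cdot> (b \<cdot> h) = (a \<cdot> b) \<cdot> h" using assms(2-6) by simp
  also have "\<dots> = h" using assms by simp
  finally show ?thesis .
qed

lemma assoc_iso: "X \<in> Obj \<Longrightarrow> Y \<in> Obj \<Longrightarrow> Z \<in> Obj \<Longrightarrow> is_iso C (\<alpha> X Y Z) ((X \<odot> Y) \<odot> Z) (X \<odot> (Y \<odot> Z))"
  by (rule mon_7[rule_format])
lemma lunit_iso: "X \<in> Obj \<Longrightarrow> is_iso C (lu X) (I \<odot> X) X"
  by (rule mon_8[rule_format])
lemma runit_iso: "X \<in> Obj \<Longrightarrow> is_iso C (ru X) (X \<odot> I) X"
  by (rule mon_9[rule_format])
lemma assoc_ty[simp]: "X \<in> Obj \<Longrightarrow> Y \<in> Obj \<Longrightarrow> Z \<in> Obj \<Longrightarrow> \<alpha> X Y Z \<in> Arr"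
   "X \<in> Obj \<Longrightarrow> Y \<in> Obj \<Longrightarrow> Z \<in> Obj \<Longrightarrow> src (\<alpha> X Y Z) = (X \<odot> Y) \<odot> Z"
   "X \<in> Obj \<Longrightarrow> Y \<in> Obj \<Longrightarrow> Z \<in> Obj \<Longrightarrow> trg (\<alpha> X Y Z) = X \<odot> (Y \<odot> Z)"
  using assoc_iso unfolding is_iso_def hom_iff by auto
lemma lunit_ty[simp]: "X \<in> Obj \<Longrightarrow> lu X \<in> Arr" "X \<in> Obj \<Longrightarrow> src (lu X) = I \<odot> X" "X \<in> Obj \<Longrightarrow> trg (lu X) = X"
  using lunit_iso unfolding is_iso_def hom_iff by auto
lemma runit_ty[simp]: "X \<in> Obj \<Longrightarrow> ru X \<in> Arr" "X \<in> Obj \<Longrightarrow> src (ru X) = X \<odot> I" "X \<in> Obj \<Longrightarrow> trg (ru X) = X"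
  using runit_iso unfolding is_iso_def hom_iff by auto

lemma ainv_prop: "X \<in> Obj \<Longrightarrow> Y \<in> Obj \<Longrightarrow> Z \<in> Obj \<Longrightarrow> \<alpha>' X Y Z \<in> hom C (X \<odot> (Y \<odot> Z)) ((X \<odot> Y) \<odot> Z) \<and>
   \<alpha>' X Y Z \<cdot> \<alpha> X Y Z = ide ((X \<odot> Y) \<odot> Z) \<and> \<alpha> X Y Z \<cdot> \<alpha>' X Y Z = ide (X \<odot> (Y \<odot> Z))"
  using iso_some[OF assoc_iso[of X Y Z]] unfolding ainv_def by blast
lemma linv_prop: "X \<in> Obj \<Longrightarrow> lu' X \<in> hom C X (I \<odot> X) \<and> lu' X \<cdot> lu X = ide (I \<odot> X) \<and> lu X \<cdot> lu' X = ide X"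
  using iso_some[OF lunit_iso[of X]] unfolding linv_def by blast
lemma rinv_prop: "X \<in> Obj \<Longrightarrow> ru' X \<in> hom C X (X \<odot> I) \<and> ru' X \<cdot> ru X = ide (X \<odot> I) \<and> ru X \<cdot> ru' X = ide X"
  using iso_some[OF runit_iso[of X]] unfolding rinv_def by blast

lemma ainv_ty[simp]: "X \<in> Obj \<Longrightarrow> Y \<in> Obj \<Longrightarrow> Z \<in> Obj \<Longrightarrow> \<alpha>' X Y Z \<in> Arr"
   "X \<in> Obj \<Longrightarrow> Y \<in> Obj \<Longrightarrow> Z \<in> Obj \<Longrightarrow> src (\<alpha>' X Y Z) = X \<odot> (Y \<odot> Z)"
   "X \<in> Obj \<Longrightarrow> Y \<in> Obj \<Longrightarrow> Z \<in> Obj \<Longrightarrow> trg (\<alpha>' X Y Z) = (X \<odot> Y) \<odot> Z"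
  using ainv_prop unfolding hom_iff by auto
lemma linv_ty[simp]: "X \<in> Obj \<Longrightarrow> lu' X \<in> Arr" "X \<in> Obj \<Longrightarrow> src (lu' X) = X" "X \<in> Obj \<Longrightarrow> trg (lu' X) = I \<odot> X"
  using linv_prop unfolding hom_iff by auto
lemma rinv_ty[simp]: "X \<in> Obj \<Longrightarrow> ru' X \<in> Arr" "X \<in> Obj \<Longrightarrow> src (ru' X) = X" "X \<in> Obj \<Longrightarrow> trg (ru' X) = X \<odot> I"
  using rinv_prop unfolding hom_iff by auto

lemma ainv_l[simp]: "X \<in> Obj \<Longrightarrow> Y \<in> Obj \<Longrightarrow> Z \<in> Obj \<Longrightarrow> \<alpha>' X Y Z \<cdot> \<alpha> X Y Z = ide ((X \<odot> Y) \<odot> Z)"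
  using ainv_prop by blast
lemma ainv_r[simp]: "X \<in> Obj \<Longrightarrow> Y \<in> Obj \<Longrightarrow> Z \<in> Obj \<Longrightarrow> \<alpha> X Y Z \<cdot> \<alpha>' X Y Z = ide (X \<odot> (Y \<odot> Z))"
  using ainv_prop by blast
lemma linv_l[simp]: "X \<in> Obj \<Longrightarrow> lu' X \<cdot> lu X = ide (I \<odot> X)" using linv_prop by blast
lemma linv_r[simp]: "X \<in> Obj \<Longrightarrow> lu X \<cdot> lu' X = ide X" using linv_prop by blast
lemma rinv_l[simp]: "X \<in> Obj \<Longrightarrow> ru' X \<cdot> ru X = ide (X \<odot> I)" using rinv_prop by blast
lemma rinv_r[simp]: "X \<in> Obj \<Longrightarrow> ru X \<cdot> ru' X = ide X" using rinv_prop by blast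

lemma ainv_l'[simp]: "X \<in> Obj \<Longrightarrow> Y \<in> Obj \<Longrightarrow> Z \<in> Obj \<Longrightarrow> h \<in> Arr \<Longrightarrow> trg h = (X \<odot> Y) \<odot> Z \<Longrightarrow> \<alpha>' X Y Z \<cdot> (\<alpha> X Y Z \<cdot> h) = h"
  by (rule cancel_tail[OF ainv_l]) auto
lemma ainv_r'[simp]: "X \<in> Obj \<Longrightarrow> Y \<in> Obj \<Longrightarrow> Z \<in> Obj \<Longrightarrow> h \<in> Arr \<Longrightarrow> trg h = X \<odot> (Y \<odot> Z) \<Longrightarrow> \<alpha> X Y Z \<cdot> (\<alpha>' X Y Z \<cdot> h) = h"
  by (rule cancel_tail[OF ainv_r]) auto
lemma linv_l'[simp]: "X \<in> Obj \<Longrightarrow> h \<in> Arr \<Longrightarrow> trg h = I \<odot> X \<Longrightarrow> lu' X \<cdot> (lu X \<cdot> h) = h"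
  by (rule cancel_tail[OF linv_l]) auto
lemma linv_r'[simp]: "X \<in> Obj \<Longrightarrow> h \<in> Arr \<Longrightarrow> trg h = X \<Longrightarrow> lu X \<cdot> (lu' X \<cdot> h) = h"
  by (rule cancel_tail[OF linv_r]) auto
lemma rinv_l'[simp]: "X \<in> Obj \<Longrightarrow> h \<in> Arr \<Longrightarrow> trg h = X \<odot> I \<Longrightarrow> ru' X \<cdot> (ru X \<cdot> h) = h"
  by (rule cancel_tail[OF rinv_l]) auto
lemma rinv_r'[simp]: "X \<in> Obj \<Longrightarrow> h \<in> Arr \<Longrightarrow> trg h = X \<Longrightarrow> ru X \<cdot> (ru' X \<cdot> h) = h"
  by (rule cancel_tail[OF rinv_r]) auto


lemma assoc_nat: "f \<in> Arr \<Longrightarrow> g \<in> Arr \<Longrightarrow> h \<in> Arr \<Longrightarrow>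
   \<alpha> (trg f) (trg g) (trg h) \<cdot> ((f \<otimes> g) \<otimes> h) = (f \<otimes> (g \<otimes> h)) \<cdot> \<alpha> (src f) (src g) (src h)"
  by (rule mon_10[rule_format]) (auto simp: hom_iff)
lemma lunit_nat: "f \<in> Arr \<Longrightarrow> lu (trg f) \<cdot> (ide I \<otimes> f) = f \<cdot> lu (src f)"
  by (rule mon_11[rule_format, THEN conjunct1]) (auto simp: hom_iff)
lemma runit_nat: "f \<in> Arr \<Longrightarrow> ru (trg f) \<cdot> (f \<otimes> ide I) = f \<cdot> ru (src f)"
  by (rule mon_11[rule_format, THEN conjunct2]) (auto simp: hom_iff)
lemma pentagon: "W \<in> Obj \<Longrightarrow> X \<in> Obj \<Longrightarrow> Y \<in> Obj \<Longrightarrow> Z \<in> Obj \<Longrightarrow>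
        \<alpha> W X (Y \<odot> Z) \<cdot> \<alpha> (W \<odot> X) Y Z =
        (ide W \<otimes> \<alpha> X Y Z) \<cdot> \<alpha> W (X \<odot> Y) Z \<cdot> (\<alpha> W X Y \<otimes> ide Z)"
  by (rule mon_12[rule_format])
lemma triangle: "X \<in> Obj \<Longrightarrow> Y \<in> Obj \<Longrightarrow> (ide X \<otimes> lu Y) \<cdot> \<alpha> X I Y = ru X \<otimes> ide Y"
  by (rule mon_13[rule_format])

lemma sym_ty[simp]: "X \<in> Obj \<Longrightarrow> Y \<in> Obj \<Longrightarrow> \<sigma> X Y \<in> Arr"
   "X \<in> Obj \<Longrightarrow> Y \<in> Obj \<Longrightarrow> src (\<sigma> X Y) = X \<odot> Y" "X \<in> Obj \<Longrightarrow> Y \<in> Obj \<Longrightarrow> trg (\<sigma> X Y) = Y \<odot> X"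
  using smon_2 unfolding hom_iff by auto
lemma sym_nat: "f \<in> Arr \<Longrightarrow> g \<in> Arr \<Longrightarrow> \<sigma> (trg f) (trg g) \<cdot> (f \<otimes> g) = (g \<otimes> f) \<cdot> \<sigma> (src f) (src g)"
  by (rule smon_3[rule_format]) (auto simp: hom_iff)
lemma sym_inv[simp]: "X \<in> Obj \<Longrightarrow> Y \<in> Obj \<Longrightarrow> \<sigma> Y X \<cdot> \<sigma> X Y = ide (X \<odot> Y)"
  by (rule smon_4[rule_format])
lemma sym_inv'[simp]: "X \<in> Obj \<Longrightarrow> Y \<in> Obj \<Longrightarrow> h \<in> Arr \<Longrightarrow> trg h = X \<odot> Y \<Longrightarrow> \<sigma> Y X \<cdot> (\<sigma> X Y \<cdot> h) = h"
  by (rule cancel_tail[OF sym_inv]) auto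
lemma hexagon: "X \<in> Obj \<Longrightarrow> Y \<in> Obj \<Longrightarrow> Z \<in> Obj \<Longrightarrow>
        \<alpha> Y Z X \<cdot> \<sigma> X (Y \<odot> Z) \<cdot> \<alpha> X Y Z = (ide Y \<otimes> \<sigma> X Z) \<cdot> \<alpha> Y X Z \<cdot> (\<sigma> X Y \<otimes> ide Z)"
  by (rule smon_5[rule_format])

lemma ob_expo[simp]: "B \<in> Obj \<Longrightarrow> Z \<in> Obj \<Longrightarrow> expo C B Z \<in> Obj"
  by (rule scm_2[rule_format, THEN conjunct1])
lemma appl_ty[simp]: "B \<in> Obj \<Longrightarrow> Z \<in> Obj \<Longrightarrow> ev B Z \<in> Arr"
   "B \<in> Obj \<Longrightarrow> Z \<in> Obj \<Longrightarrow> src (ev B Z) = expo C B Z \<odot> B" "B \<in> Obj \<Longrightarrow> Z \<in> Obj \<Longrightarrow> trg (ev B Z) = Z"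
  using scm_2 unfolding hom_iff by auto
lemma curr_ty[simp]: "X \<in> Obj \<Longrightarrow> B \<in> Obj \<Longrightarrow> Z \<in> Obj \<Longrightarrow> f \<in> Arr \<Longrightarrow> src f = X \<odot> B \<Longrightarrow> trg f = Z \<Longrightarrow> \<Lambda> X B Z f \<in> Arr"
  "X \<in> Obj \<Longrightarrow> B \<in> Obj \<Longrightarrow> Z \<in> Obj \<Longrightarrow> f \<in> Arr \<Longrightarrow> src f = X \<odot> B \<Longrightarrow> trg f = Z \<Longrightarrow> src (\<Lambda> X B Z f) = X"
  "X \<in> Obj \<Longrightarrow> B \<in> Obj \<Longrightarrow> Z \<in> Obj \<Longrightarrow> f \<in> Arr \<Longrightarrow> src f = X \<odot> B \<Longrightarrow> trg f = Z \<Longrightarrow> trg (\<Lambda> X B Z f) = expo C B Z"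
  using scm_3[rule_format, of X B Z f] unfolding hom_iff by auto
lemma curr_beta: "X \<in> Obj \<Longrightarrow> B \<in> Obj \<Longrightarrow> Z \<in> Obj \<Longrightarrow> f \<in> Arr \<Longrightarrow> src f = X \<odot> B \<Longrightarrow> trg f = Z \<Longrightarrow>
   ev B Z \<cdot> (\<Lambda> X B Z f \<otimes> ide B) = f"
  using scm_3[rule_format, of X B Z f] unfolding hom_iff by auto
lemma curr_eta: "B \<in> Obj \<Longrightarrow> Z \<in> Obj \<Longrightarrow> g \<in> Arr \<Longrightarrow> trg g = expo C B Z \<Longrightarrow> src g = X \<Longrightarrow>
   \<Lambda> X B Z (ev B Z \<cdot> (g \<otimes> ide B)) = g"
  using scm_4[rule_format, of X B Z g] unfolding hom_iff by auto

lemma ob_Mo[simp]: "X \<in> Obj \<Longrightarrow> MO X \<in> Obj" by (rule mnd_1[rule_format])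
lemma Mm_ty[simp]: "f \<in> Arr \<Longrightarrow> MF f \<in> Arr" "f \<in> Arr \<Longrightarrow> src (MF f) = MO (src f)" "f \<in> Arr \<Longrightarrow> trg (MF f) = MO (trg f)"
  using mnd_2[rule_format, of "src f" "trg f" f] unfolding hom_iff by auto
lemma M_id[simp]: "X \<in> Obj \<Longrightarrow> MF (ide X) = ide (MO X)" by (rule mnd_3[rule_format])
lemma M_cmp[simp]: "f \<in> Arr \<Longrightarrow> g \<in> Arr \<Longrightarrow> trg f = src g \<Longrightarrow> MF (g \<cdot> f) = MF g \<cdot> MF f" by (rule mnd_4[rule_format])
lemma eta_ty[simp]: "X \<in> Obj \<Longrightarrow> \<eta> X \<in> Arr" "X \<in> Obj \<Longrightarrow> src (\<eta> X) = X" "X \<in> Obj \<Longrightarrow> trg (\<eta> X) = MO X"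
  using mnd_5 unfolding hom_iff by auto
lemma mu_ty[simp]: "X \<in> Obj \<Longrightarrow> \<mu> X \<in> Arr" "X \<in> Obj \<Longrightarrow> src (\<mu> X) = MO (MO X)" "X \<in> Obj \<Longrightarrow> trg (\<mu> X) = MO X"
  using mnd_5 unfolding hom_iff by auto
lemma eta_nat: "f \<in> Arr \<Longrightarrow> \<eta> (trg f) \<cdot> f = MF f \<cdot> \<eta> (src f)"
  by (rule mnd_6[rule_format, THEN conjunct1]) (auto simp: hom_iff)
lemma mu_nat: "f \<in> Arr \<Longrightarrow> \<mu> (trg f) \<cdot> MF (MF f) = MF f \<cdot> \<mu> (src f)"
  by (rule mnd_6[rule_format, THEN conjunct2]) (auto simp: hom_iff)
lemma mu_assoc: "X \<in> Obj \<Longrightarrow> \<mu> X \<cdot> MF (\<mu> X) = \<mu> X \<cdot> \<mu> (MO X)" by (rule mnd_7[rule_format, THEN conjunct1])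
lemma mu_eta[simp]: "X \<in> Obj \<Longrightarrow> \<mu> X \<cdot> \<eta> (MO X) = ide (MO X)" by (rule mnd_7[rule_format, THEN conjunct2, THEN conjunct1])
lemma mu_Meta[simp]: "X \<in> Obj \<Longrightarrow> \<mu> X \<cdot> MF (\<eta> X) = ide (MO X)" by (rule mnd_7[rule_format, THEN conjunct2, THEN conjunct2])
lemma mu_eta'[simp]: "X \<in> Obj \<Longrightarrow> h \<in> Arr \<Longrightarrow> trg h = MO X \<Longrightarrow> \<mu> X \<cdot> (\<eta> (MO X) \<cdot> h) = h"
  by (rule cancel_tail[OF mu_eta]) auto
lemma mu_Meta'[simp]: "X \<in> Obj \<Longrightarrow> h \<in> Arr \<Longrightarrow> trg h = MO X \<Longrightarrow> \<mu> X \<cdot> (MF (\<eta> X) \<cdot> h) = h"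
  by (rule cancel_tail[OF mu_Meta]) auto

lemma tau_ty[simp]: "X \<in> Obj \<Longrightarrow> Y \<in> Obj \<Longrightarrow> \<tau> X Y \<in> Arr"
   "X \<in> Obj \<Longrightarrow> Y \<in> Obj \<Longrightarrow> src (\<tau> X Y) = MO X \<odot> Y" "X \<in> Obj \<Longrightarrow> Y \<in> Obj \<Longrightarrow> trg (\<tau> X Y) = MO (X \<odot> Y)"
  using smnd_2 unfolding hom_iff by auto
lemma tau_nat: "f \<in> Arr \<Longrightarrow> g \<in> Arr \<Longrightarrow> \<tau> (trg f) (trg g) \<cdot> (MF f \<otimes> g) = MF (f \<otimes> g) \<cdot> \<tau> (src f) (src g)"
  by (rule smnd_3[rule_format]) (auto simp: hom_iff)
lemma tau_unit: "X \<in> Obj \<Longrightarrow> MF (ru X) \<cdot> \<tau> X I = ru (MO X)" by (rule smnd_4[rule_format])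
lemma tau_assoc: "X \<in> Obj \<Longrightarrow> Y \<in> Obj \<Longrightarrow> Z \<in> Obj \<Longrightarrow>
   \<tau> X (Y \<odot> Z) \<cdot> \<alpha> (MO X) Y Z = MF (\<alpha> X Y Z) \<cdot> \<tau> (X \<odot> Y) Z \<cdot> (\<tau> X Y \<otimes> ide Z)"
  by (rule smnd_5[rule_format])
lemma tau_eta: "X \<in> Obj \<Longrightarrow> Y \<in> Obj \<Longrightarrow> \<tau> X Y \<cdot> (\<eta> X \<otimes> ide Y) = \<eta> (X \<odot> Y)" by (rule smnd_6[rule_format, THEN conjunct1])
lemma tau_mu: "X \<in> Obj \<Longrightarrow> Y \<in> Obj \<Longrightarrow> \<tau> X Y \<cdot> (\<mu> X \<otimes> ide Y) = \<mu> (X \<odot> Y) \<cdot> MF (\<tau> X Y) \<cdot> \<tau> (MO X) Y"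
  by (rule smnd_6[rule_format, THEN conjunct2])
lemma comm: "X \<in> Obj \<Longrightarrow> Y \<in> Obj \<Longrightarrow>
   \<mu> (X \<odot> Y) \<cdot> MF (\<tau> X Y) \<cdot> \<tau>' (MO X) Y = \<mu> (X \<odot> Y) \<cdot> MF (\<tau>' X Y) \<cdot> \<tau> X (MO Y)"
  by (rule cmm_2[rule_format])

lemma ltau_ty[simp]: "X \<in> Obj \<Longrightarrow> Y \<in> Obj \<Longrightarrow> \<tau>' X Y \<in> Arr"
   "X \<in> Obj \<Longrightarrow> Y \<in> Obj \<Longrightarrow> src (\<tau>' X Y) = X \<odot> MO Y" "X \<in> Obj \<Longrightarrow> Y \<in> Obj \<Longrightarrow> trg (\<tau>' X Y) = MO (X \<odot> Y)"
  unfolding ltau_def by simp_all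

end


context SMC begin

lemma tar_cmp_idl[simp]: "f \<in> Arr \<Longrightarrow> g \<in> Arr \<Longrightarrow> trg f = src g \<Longrightarrow> X \<in> Obj \<Longrightarrow>
   (g \<cdot> f) \<otimes> ide X = (g \<otimes> ide X) \<cdot> (f \<otimes> ide X)"
  using tar_cmp[of f g "ide X" "ide X"] by simp
lemma tar_cmp_idr[simp]: "f \<in> Arr \<Longrightarrow> g \<in> Arr \<Longrightarrow> trg f = src g \<Longrightarrow> X \<in> Obj \<Longrightarrow>
   ide X \<otimes> (g \<cdot> f) = (ide X \<otimes> g) \<cdot> (ide X \<otimes> f)"
  using tar_cmp[of "ide X" "ide X" f g] by simp

lemma tl: assumes "a \<cdot> b = c" "a \<in> Arr" "b \<in> Arr" "h \<in> Arr" "trg b = src a" "trg h = src b"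
  shows "a \<cdot> (b \<cdot> h) = c \<cdot> h"
proof -
  have "a \<cdot> (b \<cdot> h) = (a \<cdot> b) \<cdot> h" using assms(2-) by simp
  also have "\<dots> = c \<cdot> h" by (simp only: assms(1))
  finally show ?thesis .
qed

lemma Mlift: assumes "a \<cdot> b = c" "a \<in> Arr" "b \<in> Arr" "trg b = src a"
  shows "MF a \<cdot> MF b = MF c"
proof -
  have "MF a \<cdot> MF b = MF (a \<cdot> b)" using assms(2-) by simp
  also have "\<dots> = MF c" by (simp only: assms(1))
  finally show ?thesis .
qed

lemma tensL: assumes "a \<cdot> b = c" "a \<in> Arr" "b \<in> Arr" "trg b = src a" "X \<in> Obj"
  shows "(a \<otimes> ide X) \<cdot> (b \<otimes> ide X) = c \<otimes> ide X"
proof -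
  have "(a \<otimes> ide X) \<cdot> (b \<otimes> ide X) = (a \<cdot> b) \<otimes> ide X" using assms(2-) by simp
  also have "\<dots> = c \<otimes> ide X" by (simp only: assms(1))
  finally show ?thesis .
qed

lemma tensR: assumes "a \<cdot> b = c" "a \<in> Arr" "b \<in> Arr" "trg b = src a" "X \<in> Obj"
  shows "(ide X \<otimes> a) \<cdot> (ide X \<otimes> b) = ide X \<otimes> c"
proof -
  have "(ide X \<otimes> a) \<cdot> (ide X \<otimes> b) = ide X \<otimes> (a \<cdot> b)" using assms(2-) by simp
  also have "\<dots> = ide X \<otimes> c" by (simp only: assms(1))
  finally show ?thesis .
qed

lemma sym_nat_r: "f \<in> Arr \<Longrightarrow> g \<in> Arr \<Longrightarrow> trg f = X \<Longrightarrow> trg g = Y \<Longrightarrow>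
   \<sigma> X Y \<cdot> (f \<otimes> g) = (g \<otimes> f) \<cdot> \<sigma> (src f) (src g)"
  using sym_nat by blast
lemma sym_nat_l: "f \<in> Arr \<Longrightarrow> g \<in> Arr \<Longrightarrow> src f = X \<Longrightarrow> src g = Y \<Longrightarrow>
   (g \<otimes> f) \<cdot> \<sigma> X Y = \<sigma> (trg f) (trg g) \<cdot> (f \<otimes> g)"
  using sym_nat by metis

lemma tau_nat_r: "f \<in> Arr \<Longrightarrow> g \<in> Arr \<Longrightarrow> trg f = X \<Longrightarrow> trg g = Y \<Longrightarrow>
   \<tau> X Y \<cdot> (MF f \<otimes> g) = MF (f \<otimes> g) \<cdot> \<tau> (src f) (src g)"
  using tau_nat by blast
lemma tau_nat_r1: "g \<in> Arr \<Longrightarrow> X \<in> Obj \<Longrightarrow> trg g = Y \<Longrightarrow>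
   \<tau> X Y \<cdot> (ide (MO X) \<otimes> g) = MF (ide X \<otimes> g) \<cdot> \<tau> X (src g)"
  using tau_nat[of "ide X" g] by simp

lemma eta_nat_r: "f \<in> Arr \<Longrightarrow> trg f = X \<Longrightarrow> \<eta> X \<cdot> f = MF f \<cdot> \<eta> (src f)"
  using eta_nat by blast
lemma mu_nat_r: "f \<in> Arr \<Longrightarrow> trg f = X \<Longrightarrow> \<mu> X \<cdot> MF (MF f) = MF f \<cdot> \<mu> (src f)"
  using mu_nat by blast

lemma eta_nat_l: "f \<in> Arr \<Longrightarrow> src f = X \<Longrightarrow> MF f \<cdot> \<eta> X = \<eta> (trg f) \<cdot> f"
  using eta_nat by metis
lemma mu_nat_l: "f \<in> Arr \<Longrightarrow> src f = X \<Longrightarrow> MF f \<cdot> \<mu> X = \<mu> (trg f) \<cdot> MF (MF f)"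
  using mu_nat by metis

lemma ltau_nat: assumes "f \<in> Arr" "g \<in> Arr" "trg f = X" "trg g = Y"
  shows "\<tau>' X Y \<cdot> (f \<otimes> MF g) = MF (f \<otimes> g) \<cdot> \<tau>' (src f) (src g)"
  using assms cd_ob[OF assms(1)] cd_ob[OF assms(2)]
  by (simp add: ltau_def tl[OF sym_nat_r] tl[OF tau_nat_r] sym_nat_r tl[OF Mlift[OF sym_nat_r]])

lemma ltau_eta: assumes "X \<in> Obj" "Y \<in> Obj"
  shows "\<tau>' X Y \<cdot> (ide X \<otimes> \<eta> Y) = \<eta> (X \<odot> Y)"
  using assms
  by (simp add: ltau_def sym_nat_r tl[OF sym_nat_r] tl[OF tau_eta] tl[OF eta_nat_l] eta_nat_l)

lemma ltau_mu: assumes "X \<in> Obj" "Y \<in> Obj"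
  shows "\<tau>' X Y \<cdot> (ide X \<otimes> \<mu> Y) = \<mu> (X \<odot> Y) \<cdot> MF (\<tau>' X Y) \<cdot> \<tau>' X (MO Y)"
  using assms
  by (simp add: ltau_def sym_nat_r tl[OF sym_nat_r] tl[OF tau_mu] tl[OF mu_nat_l] mu_nat_l tl[OF Mlift[OF sym_inv]])

lemma tl3: assumes "a \<cdot> (b \<cdot> c) = d" "a \<in> Arr" "b \<in> Arr" "c \<in> Arr" "h \<in> Arr" "trg b = src a" "trg c = src b" "trg h = src c"
  shows "a \<cdot> (b \<cdot> (c \<cdot> h)) = d \<cdot> h"
proof -
  have "a \<cdot> (b \<cdot> (c \<cdot> h)) = (a \<cdot> (b \<cdot> c)) \<cdot> h" using assms(2-) by simp
  also have "\<dots> = d \<cdot> h" by (simp only: assms(1))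
  finally show ?thesis .
qed

lemma cancel_r: assumes "a \<cdot> p = b \<cdot> p" "p \<cdot> p' = ide Y" "a \<in> Arr" "b \<in> Arr" "p \<in> Arr" "p' \<in> Arr"
  "trg p = src a" "trg p = src b" "trg p' = src p" "Y = trg p"
  shows "a = b"
proof -
  have "a = a \<cdot> ide Y" using assms(3-) by simp
  also have "\<dots> = a \<cdot> (p \<cdot> p')" by (simp only: assms(2))
  also have "\<dots> = (a \<cdot> p) \<cdot> p'" using assms(3-) by simp
  also have "\<dots> = (b \<cdot> p) \<cdot> p'" by (simp only: assms(1))
  also have "\<dots> = b \<cdot> (p \<cdot> p')" using assms(3-) by simp
  also have "\<dots> = b \<cdot> ide Y" by (simp only: assms(2))
  also have "\<dots> = b" using assms(3-) by simp
  finally show ?thesis .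
qed

lemma cancel_l: assumes "p \<cdot> a = p \<cdot> b" "p' \<cdot> p = ide Y" "a \<in> Arr" "b \<in> Arr" "p \<in> Arr" "p' \<in> Arr"
  "trg a = src p" "trg b = src p" "trg p = src p'" "Y = src p"
  shows "a = b"
proof -
  have "a = ide Y \<cdot> a" using assms(3-) by simp
  also have "\<dots> = (p' \<cdot> p) \<cdot> a" by (simp only: assms(2))
  also have "\<dots> = p' \<cdot> (p \<cdot> a)" using assms(3-) by simp
  also have "\<dots> = p' \<cdot> (p \<cdot> b)" by (simp only: assms(1))
  also have "\<dots> = (p' \<cdot> p) \<cdot> b" using assms(3-) by simp
  also have "\<dots> = ide Y \<cdot> b" by (simp only: assms(2))
  also have "\<dots> = b" using assms(3-) by simp
  finally show ?thesis .
qed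

lemma faith_I: assumes "ide I \<otimes> f = ide I \<otimes> g" "f \<in> Arr" "g \<in> Arr" "src f = src g" "trg f = trg g"
  shows "f = g"
proof -
  have "f \<cdot> lu (src f) = lu (trg f) \<cdot> (ide I \<otimes> f)" using lunit_nat assms by metis
  also have "\<dots> = lu (trg g) \<cdot> (ide I \<otimes> g)" using assms by simp
  also have "\<dots> = g \<cdot> lu (src f)" using lunit_nat assms by metis
  finally have "f \<cdot> lu (src f) = g \<cdot> lu (src f)" .
  then show ?thesis
    by (rule cancel_r[where p' = "lu' (src f)"]) (use assms in auto)
qed

lemma faith_I': assumes "f \<otimes> ide I = g \<otimes> ide I" "f \<in> Arr" "g \<in> Arr" "src f = src g" "trg f = trg g"
  shows "f = g"
proof -
  have "f \<cdot> ru (src f) = ru (trg f) \<cdot> (f \<otimes> ide I)" using runit_nat assms by metis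
  also have "\<dots> = ru (trg g) \<cdot> (g \<otimes> ide I)" using assms by simp
  also have "\<dots> = g \<cdot> ru (src f)" using runit_nat assms by metis
  finally have "f \<cdot> ru (src f) = g \<cdot> ru (src f)" .
  then show ?thesis
    by (rule cancel_r[where p' = "ru' (src f)"]) (use assms in auto)
qed

lemma assoc_nat_r: "f \<in> Arr \<Longrightarrow> g \<in> Arr \<Longrightarrow> h \<in> Arr \<Longrightarrow> trg f = X \<Longrightarrow> trg g = Y \<Longrightarrow> trg h = Z \<Longrightarrow>
   \<alpha> X Y Z \<cdot> ((f \<otimes> g) \<otimes> h) = (f \<otimes> (g \<otimes> h)) \<cdot> \<alpha> (src f) (src g) (src h)"
  using assoc_nat by blast
lemma assoc_nat_l: "f \<in> Arr \<Longrightarrow> g \<in> Arr \<Longrightarrow> h \<in> Arr \<Longrightarrow> src f = X \<Longrightarrow> src g = Y \<Longrightarrow> src h = Z \<Longrightarrow>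
   (f \<otimes> (g \<otimes> h)) \<cdot> \<alpha> X Y Z = \<alpha> (trg f) (trg g) (trg h) \<cdot> ((f \<otimes> g) \<otimes> h)"
  using assoc_nat by metis
lemma assoc_nat_l1: "f \<in> Arr \<Longrightarrow> Y \<in> Obj \<Longrightarrow> Z \<in> Obj \<Longrightarrow> src f = X \<Longrightarrow>
   (f \<otimes> ide (Y \<odot> Z)) \<cdot> \<alpha> X Y Z = \<alpha> (trg f) Y Z \<cdot> ((f \<otimes> ide Y) \<otimes> ide Z)"
  using assoc_nat[of f "ide Y" "ide Z"] by simp
lemma assoc_nat_r1: "f \<in> Arr \<Longrightarrow> Y \<in> Obj \<Longrightarrow> Z \<in> Obj \<Longrightarrow> trg f = X \<Longrightarrow>
   \<alpha> X Y Z \<cdot> ((f \<otimes> ide Y) \<otimes> ide Z) = (f \<otimes> ide (Y \<odot> Z)) \<cdot> \<alpha> (src f) Y Z"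
  using assoc_nat[of f "ide Y" "ide Z"] by simp

lemma lunit_assoc: assumes "X \<in> Obj" "Y \<in> Obj"
  shows "lu (X \<odot> Y) \<cdot> \<alpha> I X Y = lu X \<otimes> ide Y"
proof -
  let ?P = "\<alpha> I (I \<odot> X) Y \<cdot> (\<alpha> I I X \<otimes> ide Y)"
  have "(ide I \<otimes> (lu (X \<odot> Y) \<cdot> \<alpha> I X Y)) \<cdot> ?P = (ide I \<otimes> lu (X \<odot> Y)) \<cdot> (\<alpha> I I (X \<odot> Y) \<cdot> \<alpha> (I \<odot> I) X Y)"
    using assms by (simp add: pentagon)
  also have "\<dots> = (ru I \<otimes> ide (X \<odot> Y)) \<cdot> \<alpha> (I \<odot> I) X Y"
    using assms by (simp add: tl[OF triangle])
  also have "\<dots> = \<alpha> I X Y \<cdot> ((ru I \<otimes> ide X) \<otimes> ide Y)"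
    using assms by (simp add: assoc_nat_l1)
  also have "\<dots> = \<alpha> I X Y \<cdot> (((ide I \<otimes> lu X) \<cdot> \<alpha> I I X) \<otimes> ide Y)"
    using assms by (simp add: triangle)
  also have "\<dots> = (ide I \<otimes> (lu X \<otimes> ide Y)) \<cdot> ?P"
    using assms by (simp add: tl[OF assoc_nat_r])
  finally have "(ide I \<otimes> (lu (X \<odot> Y) \<cdot> \<alpha> I X Y)) \<cdot> ?P = (ide I \<otimes> (lu X \<otimes> ide Y)) \<cdot> ?P" .
  then have "ide I \<otimes> (lu (X \<odot> Y) \<cdot> \<alpha> I X Y) = ide I \<otimes> (lu X \<otimes> ide Y)"
    by (rule cancel_r[where p' = "(\<alpha>' I I X \<otimes> ide Y) \<cdot> \<alpha>' I (I \<odot> X) Y"]) (use assms in \<open>simp_all add: tl[OF tensL[OF ainv_r]]\<close>)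
  then show ?thesis by (rule faith_I) (use assms in simp_all)
qed

lemma lunit_nat_r: "f \<in> Arr \<Longrightarrow> trg f = Y \<Longrightarrow> lu Y \<cdot> (ide I \<otimes> f) = f \<cdot> lu (src f)"
  using lunit_nat by blast
lemma runit_nat_r: "f \<in> Arr \<Longrightarrow> trg f = Y \<Longrightarrow> ru Y \<cdot> (f \<otimes> ide I) = f \<cdot> ru (src f)"
  using runit_nat by blast
lemma lunit_nat_l: "f \<in> Arr \<Longrightarrow> src f = X \<Longrightarrow> f \<cdot> lu X = lu (trg f) \<cdot> (ide I \<otimes> f)"
  using lunit_nat by metis
lemma runit_nat_l: "f \<in> Arr \<Longrightarrow> src f = X \<Longrightarrow> f \<cdot> ru X = ru (trg f) \<cdot> (f \<otimes> ide I)"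
  using runit_nat by metis

lemma lunit_sym: assumes X: "X \<in> Obj"
  shows "lu X \<cdot> \<sigma> X I = ru X"
proof -
  have e1: "lu (I \<odot> X) \<cdot> (\<alpha> I I X \<cdot> (\<sigma> X (I \<odot> I) \<cdot> \<alpha> X I I)) = \<sigma> X I \<cdot> (ru X \<otimes> ide I)"
    using X by (simp add: tl[OF lunit_assoc] tl[OF sym_nat_l] triangle)
  have e2: "lu (I \<odot> X) \<cdot> ((ide I \<otimes> \<sigma> X I) \<cdot> (\<alpha> I X I \<cdot> (\<sigma> X I \<otimes> ide I))) = \<sigma> X I \<cdot> ((lu X \<cdot> \<sigma> X I) \<otimes> ide I)"
    using X by (simp add: tl[OF lunit_nat_r] tl[OF lunit_assoc])
  have "\<sigma> X I \<cdot> (ru X \<otimes> ide I) = lu (I \<odot> X) \<cdot> (\<alpha> I I X \<cdot> (\<sigma> X (I \<odot> I) \<cdot> \<alpha> X I I))"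
    using e1 by simp
  also have "\<dots> = lu (I \<odot> X) \<cdot> ((ide I \<otimes> \<sigma> X I) \<cdot> (\<alpha> I X I \<cdot> (\<sigma> X I \<otimes> ide I)))"
    using X by (simp add: hexagon)
  also have "\<dots> = \<sigma> X I \<cdot> ((lu X \<cdot> \<sigma> X I) \<otimes> ide I)" using e2 by simp
  finally have "\<sigma> X I \<cdot> (ru X \<otimes> ide I) = \<sigma> X I \<cdot> ((lu X \<cdot> \<sigma> X I) \<otimes> ide I)" .
  then have "ru X \<otimes> ide I = (lu X \<cdot> \<sigma> X I) \<otimes> ide I"
    by (rule cancel_l[where p'="\<sigma> I X"]) (use X in simp_all)
  then have "ru X = lu X \<cdot> \<sigma> X I"
    by (rule faith_I') (use X in simp_all)
  then show ?thesis by simp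
qed

lemma runit_sym: assumes X: "X \<in> Obj" shows "ru X \<cdot> \<sigma> I X = lu X"
  using X by (simp add: lunit_sym[symmetric])

lemma ltau_unit: assumes Y: "Y \<in> Obj" shows "MF (lu Y) \<cdot> \<tau>' I Y = lu (MO Y)"
  using Y by (simp add: ltau_def tl[OF Mlift[OF lunit_sym]] tl[OF tau_unit] runit_sym)

lemma Mlift3: assumes "a \<cdot> (b \<cdot> c) = d" "a \<in> Arr" "b \<in> Arr" "c \<in> Arr" "trg b = src a" "trg c = src b"
  shows "MF a \<cdot> (MF b \<cdot> MF c) = MF d"
proof -
  have "MF a \<cdot> (MF b \<cdot> MF c) = MF (a \<cdot> (b \<cdot> c))" using assms(2-) by simp
  also have "\<dots> = MF d" by (simp only: assms(1))
  finally show ?thesis .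
qed

lemma hex_a: assumes "X \<in> Obj" "Y \<in> Obj" "Z \<in> Obj"
  shows "\<alpha> Y Z X \<cdot> \<sigma> X (Y \<odot> Z) = (ide Y \<otimes> \<sigma> X Z) \<cdot> \<alpha> Y X Z \<cdot> (\<sigma> X Y \<otimes> ide Z) \<cdot> \<alpha>' X Y Z"
proof -
  have "(\<alpha> Y Z X \<cdot> \<sigma> X (Y \<odot> Z)) \<cdot> \<alpha> X Y Z = ((ide Y \<otimes> \<sigma> X Z) \<cdot> \<alpha> Y X Z \<cdot> (\<sigma> X Y \<otimes> ide Z) \<cdot> \<alpha>' X Y Z) \<cdot> \<alpha> X Y Z"
    using assms by (simp add: hexagon)
  then show ?thesis by (rule cancel_r[where p'="\<alpha>' X Y Z"]) (use assms in simp_all)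
qed

lemma coh_a: assumes "P \<in> Obj" "Q \<in> Obj" "R \<in> Obj"
  shows "\<alpha> R Q P \<cdot> (\<sigma> Q R \<otimes> ide P) \<cdot> \<sigma> P (Q \<odot> R) \<cdot> \<alpha> P Q R = (ide R \<otimes> \<sigma> P Q) \<cdot> \<sigma> (P \<odot> Q) R"
proof -
  have "(\<alpha> R Q P \<cdot> (\<sigma> Q R \<otimes> ide P) \<cdot> \<sigma> P (Q \<odot> R) \<cdot> \<alpha> P Q R) \<cdot> \<sigma> R (P \<odot> Q) = ((ide R \<otimes> \<sigma> P Q) \<cdot> \<sigma> (P \<odot> Q) R) \<cdot> \<sigma> R (P \<odot> Q)"
    using assms by (simp add: tl[OF hex_a] hex_a tl[OF sym_nat_r] tl[OF tensL[OF sym_inv]] tl3[OF hexagon] tensL[OF sym_inv])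
  then show ?thesis by (rule cancel_r[where p'="\<sigma> (P \<odot> Q) R"]) (use assms in simp_all)
qed

end


context SMC begin

lemma coh_b: assumes "P \<in> Obj" "Q \<in> Obj" "R \<in> Obj"
  shows "\<sigma> (Q \<odot> R) P \<cdot> (\<sigma> R Q \<otimes> ide P) \<cdot> \<alpha>' R Q P = \<alpha> P Q R \<cdot> \<sigma> R (P \<odot> Q) \<cdot> (ide R \<otimes> \<sigma> Q P)"
proof -
  have l: "(\<sigma> (Q \<odot> R) P \<cdot> (\<sigma> R Q \<otimes> ide P) \<cdot> \<alpha>' R Q P) \<cdot> ((ide R \<otimes> \<sigma> P Q) \<cdot> \<sigma> (P \<odot> Q) R) = \<alpha> P Q R"
    using assms by (simp add: coh_a[symmetric] tl[OF tensL[OF sym_inv]])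
  have r: "(\<alpha> P Q R \<cdot> \<sigma> R (P \<odot> Q) \<cdot> (ide R \<otimes> \<sigma> Q P)) \<cdot> ((ide R \<otimes> \<sigma> P Q) \<cdot> \<sigma> (P \<odot> Q) R) = \<alpha> P Q R"
    using assms by (simp add: tl[OF tensR[OF sym_inv]])
  from l r have "(\<sigma> (Q \<odot> R) P \<cdot> (\<sigma> R Q \<otimes> ide P) \<cdot> \<alpha>' R Q P) \<cdot> ((ide R \<otimes> \<sigma> P Q) \<cdot> \<sigma> (P \<odot> Q) R) =
     (\<alpha> P Q R \<cdot> \<sigma> R (P \<odot> Q) \<cdot> (ide R \<otimes> \<sigma> Q P)) \<cdot> ((ide R \<otimes> \<sigma> P Q) \<cdot> \<sigma> (P \<odot> Q) R)" by (simp only:)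
  then show ?thesis
    by (rule cancel_r[where p'="\<sigma> R (P \<odot> Q) \<cdot> (ide R \<otimes> \<sigma> Q P)"]) (use assms in \<open>simp_all add: tl[OF tensR[OF sym_inv]] tensR[OF sym_inv]\<close>)
qed

lemma coh_c: assumes "X \<in> Obj" "Y \<in> Obj" "Z \<in> Obj"
  shows "\<sigma> (Y \<odot> Z) X \<cdot> \<alpha>' Y Z X \<cdot> (ide Y \<otimes> \<sigma> X Z) = \<alpha> X Y Z \<cdot> (\<sigma> Y X \<otimes> ide Z) \<cdot> \<alpha>' Y X Z"
proof -
  let ?p = "\<alpha> Y X Z \<cdot> (\<sigma> X Y \<otimes> ide Z) \<cdot> \<alpha>' X Y Z"
  have l: "(\<sigma> (Y \<odot> Z) X \<cdot> \<alpha>' Y Z X \<cdot> (ide Y \<otimes> \<sigma> X Z)) \<cdot> ?p = ide (X \<odot> (Y \<odot> Z))"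
    using assms by (simp add: hex_a[symmetric])
  have r: "(\<alpha> X Y Z \<cdot> (\<sigma> Y X \<otimes> ide Z) \<cdot> \<alpha>' Y X Z) \<cdot> ?p = ide (X \<odot> (Y \<odot> Z))"
    using assms by (simp add: tl[OF tensL[OF sym_inv]])
  from l r have "(\<sigma> (Y \<odot> Z) X \<cdot> \<alpha>' Y Z X \<cdot> (ide Y \<otimes> \<sigma> X Z)) \<cdot> ?p = (\<alpha> X Y Z \<cdot> (\<sigma> Y X \<otimes> ide Z) \<cdot> \<alpha>' Y X Z) \<cdot> ?p"
    by (simp only:)
  then show ?thesis
    by (rule cancel_r[where p'="\<alpha> X Y Z \<cdot> (\<sigma> Y X \<otimes> ide Z) \<cdot> \<alpha>' Y X Z"]) (use assms in \<open>simp_all add: tl[OF tensL[OF sym_inv]]\<close>)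
qed

lemma tau_assoc': assumes "X \<in> Obj" "Y \<in> Obj" "Z \<in> Obj"
  shows "\<tau> (X \<odot> Y) Z \<cdot> (\<tau> X Y \<otimes> ide Z) = MF (\<alpha>' X Y Z) \<cdot> \<tau> X (Y \<odot> Z) \<cdot> \<alpha> (MO X) Y Z"
proof -
  have l: "MF (\<alpha> X Y Z) \<cdot> (\<tau> (X \<odot> Y) Z \<cdot> (\<tau> X Y \<otimes> ide Z)) = \<tau> X (Y \<odot> Z) \<cdot> \<alpha> (MO X) Y Z"
    using assms by (simp add: tau_assoc)
  have r: "MF (\<alpha> X Y Z) \<cdot> (MF (\<alpha>' X Y Z) \<cdot> \<tau> X (Y \<odot> Z) \<cdot> \<alpha> (MO X) Y Z) = \<tau> X (Y \<odot> Z) \<cdot> \<alpha> (MO X) Y Z"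
    using assms by (simp add: tl[OF Mlift[OF ainv_r]])
  from l r have "MF (\<alpha> X Y Z) \<cdot> (\<tau> (X \<odot> Y) Z \<cdot> (\<tau> X Y \<otimes> ide Z)) = MF (\<alpha> X Y Z) \<cdot> (MF (\<alpha>' X Y Z) \<cdot> \<tau> X (Y \<odot> Z) \<cdot> \<alpha> (MO X) Y Z)"
    by (simp only:)
  then show ?thesis
    by (rule cancel_l[where p'="MF (\<alpha>' X Y Z)"]) (use assms in \<open>simp_all add: Mlift[OF ainv_l]\<close>)
qed

lemma ltau_assoc: assumes "X \<in> Obj" "Y \<in> Obj" "Z \<in> Obj"
  shows "MF (\<alpha> X Y Z) \<cdot> \<tau>' (X \<odot> Y) Z = \<tau>' X (Y \<odot> Z) \<cdot> (ide X \<otimes> \<tau>' Y Z) \<cdot> \<alpha> X Y (MO Z)"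
  using assms
  by (simp add: ltau_def tl[OF sym_nat_r] tl[OF tau_nat_r] tl[OF tau_assoc'] coh_a tl[OF tau_nat_r1]
        tl3[OF Mlift3[OF coh_b]] tl[OF Mlift[OF tensR[OF sym_inv]]])

lemma mixed_assoc: assumes "X \<in> Obj" "Y \<in> Obj" "Z \<in> Obj"
  shows "MF (\<alpha> X Y Z) \<cdot> \<tau> (X \<odot> Y) Z \<cdot> (\<tau>' X Y \<otimes> ide Z) = \<tau>' X (Y \<odot> Z) \<cdot> (ide X \<otimes> \<tau> Y Z) \<cdot> \<alpha> X (MO Y) Z"
  using assms
  by (simp add: ltau_def tl[OF sym_nat_r] tl[OF tau_nat_r] tl[OF tau_assoc'] hexagon tl3[OF hexagon] tl[OF tau_nat_r1]
        tl3[OF Mlift3[OF coh_c]])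


lemma xch2: assumes "f \<in> Arr" "g \<in> Arr" "h \<in> Arr" "trg f = Y" "trg h = src g"
  shows "(ide Y \<otimes> g) \<cdot> (f \<otimes> h) = (f \<otimes> ide (trg g)) \<cdot> (ide (src f) \<otimes> (g \<cdot> h))"
proof -
  have Yo: "Y \<in> Obj" using assms(1,4) by auto
  have "(ide Y \<otimes> g) \<cdot> (f \<otimes> h) = (ide Y \<cdot> f) \<otimes> (g \<cdot> h)" by (rule tar_cmp[symmetric]) (use assms Yo in simp_all)
  also have "\<dots> = (f \<cdot> ide (src f)) \<otimes> (ide (trg g) \<cdot> (g \<cdot> h))" using assms by simp
  also have "\<dots> = (f \<otimes> ide (trg g)) \<cdot> (ide (src f) \<otimes> (g \<cdot> h))" by (rule tar_cmp) (use assms in simp_all)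
  finally show ?thesis .
qed

lemma ltau_nat1: "f \<in> Arr \<Longrightarrow> Y \<in> Obj \<Longrightarrow> trg f = X \<Longrightarrow>
   \<tau>' X Y \<cdot> (f \<otimes> ide (MO Y)) = MF (f \<otimes> ide Y) \<cdot> \<tau>' (src f) Y"
  using ltau_nat[of f "ide Y" X Y] by simp
lemma ltau_nat_l: "f \<in> Arr \<Longrightarrow> g \<in> Arr \<Longrightarrow> src f = X \<Longrightarrow> src g = Y \<Longrightarrow>
   MF (f \<otimes> g) \<cdot> \<tau>' X Y = \<tau>' (trg f) (trg g) \<cdot> (f \<otimes> MF g)"
  using ltau_nat[of f g "trg f" "trg g"] by simp
lemma tau_nat_l1: "g \<in> Arr \<Longrightarrow> X \<in> Obj \<Longrightarrow> src g = Y \<Longrightarrow>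
   MF (ide X \<otimes> g) \<cdot> \<tau> X Y = \<tau> X (trg g) \<cdot> (ide (MO X) \<otimes> g)"
  using tau_nat[of "ide X" g] by simp

lemma curr_nat: assumes "X \<in> Obj" "B \<in> Obj" "Z \<in> Obj" "f \<in> Arr" "src f = X \<odot> B" "trg f = Z" "g \<in> Arr" "trg g = X"
  shows "\<Lambda> X B Z f \<cdot> g = \<Lambda> (src g) B Z (f \<cdot> (g \<otimes> ide B))"
proof -
  have "\<Lambda> X B Z f \<cdot> g = \<Lambda> (src (\<Lambda> X B Z f \<cdot> g)) B Z (ev B Z \<cdot> ((\<Lambda> X B Z f \<cdot> g) \<otimes> ide B))"
    by (rule curr_eta[symmetric]) (use assms in simp_all)
  also have "\<dots> = \<Lambda> (src g) B Z (f \<cdot> (g \<otimes> ide B))"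
    using assms by (simp add: tl[OF curr_beta])
  finally show ?thesis .
qed

lemma curr_ev: "B \<in> Obj \<Longrightarrow> Z \<in> Obj \<Longrightarrow> \<Lambda> (expo C B Z) B Z (ev B Z) = ide (expo C B Z)"
  using curr_eta[of B Z "ide (expo C B Z)" "expo C B Z"] by simp

lemma curr_exp: "B \<in> Obj \<Longrightarrow> Z \<in> Obj \<Longrightarrow> g \<in> Arr \<Longrightarrow> trg g = expo C B Z \<Longrightarrow>
   g = \<Lambda> (src g) B Z (ev B Z \<cdot> (g \<otimes> ide B))"
  by (rule curr_eta[symmetric]) simp_all

lemma assoc_nat_r2: "h \<in> Arr \<Longrightarrow> X \<in> Obj \<Longrightarrow> Y \<in> Obj \<Longrightarrow> trg h = Z \<Longrightarrow>
   \<alpha> X Y Z \<cdot> (ide (X \<odot> Y) \<otimes> h) = (ide X \<otimes> (ide Y \<otimes> h)) \<cdot> \<alpha> X Y (src h)"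
  using assoc_nat[of "ide X" "ide Y" h] by simp

lemma rinv_nat: assumes "f \<in> Arr" "trg f = Y"
  shows "ru' Y \<cdot> f = (f \<otimes> ide I) \<cdot> ru' (src f)"
proof -
  have Yo: "Y \<in> Obj" using assms by auto
  have "ru Y \<cdot> (ru' Y \<cdot> f) = ru Y \<cdot> ((f \<otimes> ide I) \<cdot> ru' (src f))"
    using assms Yo by (simp add: tl[OF runit_nat_r])
  then show ?thesis by (rule cancel_l[where p'="ru' Y"]) (use assms Yo in simp_all)
qed

end



locale SMCA = SMC +
  fixes A and m u
  assumes A: "A \<in> Ob C"
    and emm: "sym_em_monoid C M (Mo M A) (mu M A) m u"
begin

abbreviation "MA \<equiv> MO A"
abbreviation "K \<equiv> expo C A (MO A)"
abbreviation "evA \<equiv> ev A (MO A)"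
abbreviation "q \<equiv> qmap C M A"
abbreviation "w \<equiv> wmap C M A"
abbreviation "kc \<equiv> kcomp C M A"
abbreviation "ki \<equiv> kident C M A"
abbreviation "aK \<equiv> \<Lambda> (MO K) A MA q"
abbreviation "sA \<equiv> m \<cdot> (ide MA \<otimes> \<eta> A)"
abbreviation "lsA \<equiv> \<Lambda> MA A MA sA"
abbreviation "extA \<equiv> \<mu> A \<cdot> MF evA \<cdot> \<tau>' K A"

lemma A_ob[simp]: "A \<in> Obj" by (rule A)

lemma m_ty[simp]: "m \<in> Arr" "src m = MA \<odot> MA" "trg m = MA"
  using emm unfolding sym_em_monoid_def hom_iff by auto
lemma u_ty[simp]: "u \<in> Arr" "src u = I" "trg u = MA"
  using emm unfolding sym_em_monoid_def hom_iff by auto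
lemma m_assoc: "m \<cdot> (m \<otimes> ide MA) = m \<cdot> (ide MA \<otimes> m) \<cdot> \<alpha> MA MA MA"
  using emm unfolding sym_em_monoid_def by blast
lemma m_lu: "m \<cdot> (u \<otimes> ide MA) = lu MA"
  using emm unfolding sym_em_monoid_def by blast
lemma m_ru: "m \<cdot> (ide MA \<otimes> u) = ru MA"
  using emm unfolding sym_em_monoid_def by blast
lemma m_compat: "\<mu> A \<cdot> MF m \<cdot> \<mu> (MA \<odot> MA) \<cdot> MF (\<tau>' MA MA) \<cdot> \<tau> MA (MO MA) = m \<cdot> (\<mu> A \<otimes> \<mu> A)"
  using emm unfolding sym_em_monoid_def by blast

lemma q_ty[simp]: "q \<in> Arr" "src q = MO K \<odot> A" "trg q = MA"
  unfolding qmap_def by simp_all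
lemma w_ty[simp]: "w \<in> Arr" "src w = (K \<odot> K) \<odot> A" "trg w = MA"
  unfolding wmap_def by simp_all
lemma kc_ty[simp]: "kc \<in> Arr" "src kc = K \<odot> K" "trg kc = K"
  unfolding kcomp_def by simp_all
lemma ki_ty[simp]: "ki \<in> Arr" "src ki = I" "trg ki = K"
  unfolding kident_def by simp_all

lemma kc_beta: "evA \<cdot> (kc \<otimes> ide A) = w"
  unfolding kcomp_def by (simp add: curr_beta)
lemma kc_curr: "kc = \<Lambda> (K \<odot> K) A MA w" unfolding kcomp_def ..
lemma ki_curr: "ki = \<Lambda> I A MA (\<eta> A \<cdot> lu A)" unfolding kident_def ..

lemma M1: "m \<cdot> (ide MA \<otimes> \<mu> A) = \<mu> A \<cdot> MF m \<cdot> \<tau>' MA MA"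
proof -
  have "m \<cdot> (ide MA \<otimes> \<mu> A) = m \<cdot> ((\<mu> A \<otimes> \<mu> A) \<cdot> (\<eta> MA \<otimes> ide (MO MA)))"
    by (simp add: tar_cmp[symmetric])
  also have "\<dots> = \<mu> A \<cdot> MF m \<cdot> \<tau>' MA MA"
    by (simp add: tl[OF m_compat[symmetric]] tau_eta eta_nat_l)
  finally show ?thesis .
qed

lemma M2: "m \<cdot> (\<mu> A \<otimes> ide MA) = \<mu> A \<cdot> MF m \<cdot> \<tau> MA MA"
proof -
  have "m \<cdot> (\<mu> A \<otimes> ide MA) = m \<cdot> ((\<mu> A \<otimes> \<mu> A) \<cdot> (ide (MO MA) \<otimes> \<eta> MA))"
    by (simp add: tar_cmp[symmetric])
  also have "\<dots> = \<mu> A \<cdot> MF m \<cdot> \<tau> MA MA"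
    by (simp add: tl[OF m_compat[symmetric]] tau_nat_r1 tl[OF Mlift[OF ltau_eta]])
  finally show ?thesis .
qed

lemma E2a: "\<mu> A \<cdot> MF sA \<cdot> \<tau>' MA A = m"
  by (simp add: ltau_nat_l tl3[OF M1[symmetric]] M1[symmetric] tensR[OF mu_Meta])

lemma E1: "lsA \<cdot> \<mu> A = aK \<cdot> MF lsA"
  by (simp add: curr_nat qmap_def xch2[of "\<mu> A"] tl[OF M2] tau_nat_r1 tau_nat_r tl[OF Mlift[OF curr_beta]])

lemma E3: "lsA \<cdot> u = ki"
  by (simp add: curr_nat kident_def xch2[of u] tl[OF m_lu] lunit_nat_r)

lemma tl4: assumes "a \<cdot> (b \<cdot> (c \<cdot> d)) = e" "a \<in> Arr" "b \<in> Arr" "c \<in> Arr" "d \<in> Arr" "h \<in> Arr"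
   "trg b = src a" "trg c = src b" "trg d = src c" "trg h = src d"
  shows "a \<cdot> (b \<cdot> (c \<cdot> (d \<cdot> h))) = e \<cdot> h"
proof -
  have "a \<cdot> (b \<cdot> (c \<cdot> (d \<cdot> h))) = (a \<cdot> (b \<cdot> (c \<cdot> d))) \<cdot> h" using assms(2-) by simp
  also have "\<dots> = e \<cdot> h" by (simp only: assms(1))
  finally show ?thesis .
qed

lemma E2a': "\<mu> A \<cdot> (MF m \<cdot> (MF (ide MA \<otimes> \<eta> A) \<cdot> \<tau>' MA A)) = m"
  using E2a by simp

lemma E2: "lsA \<cdot> m = kc \<cdot> (lsA \<otimes> lsA)"
  by (simp add: kc_curr curr_nat wmap_def xch2[of m] tl[OF m_assoc] assoc_nat_r2 assoc_nat_r
     tl[OF xch2[of lsA]] curr_beta tl[OF ltau_nat1] tl[OF Mlift[OF curr_beta]] tl4[OF E2a'])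

lemma split: "(extA \<cdot> (ide K \<otimes> u) \<cdot> ru' K) \<cdot> lsA = ide MA"
  by (simp add: rinv_nat tl[OF xch2[of lsA]] tl[OF ltau_nat1] tl[OF Mlift[OF curr_beta]] tl4[OF E2a'] tl[OF m_ru])

lemma Kalg1: "aK \<cdot> \<eta> K = ide K"
  by (simp add: curr_nat qmap_def tau_eta eta_nat_l curr_ev)

lemma Kalg2: "aK \<cdot> MF aK = aK \<cdot> \<mu> K"
  by (simp add: curr_nat qmap_def tau_nat_r tl[OF Mlift[OF curr_beta]] tl[OF mu_assoc] tau_mu tl[OF mu_nat_l])

lemma Kru: "kc \<cdot> (ide K \<otimes> ki) = ru K"
proof -
  have e: "\<Lambda> (K \<odot> I) A MA (evA \<cdot> (ru K \<otimes> ide A)) = ru K" by (rule curr_eta) simp_all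
  have "kc \<cdot> (ide K \<otimes> ki) = \<Lambda> (K \<odot> I) A MA (evA \<cdot> (ru K \<otimes> ide A))"
    by (simp add: kc_curr ki_curr curr_nat wmap_def assoc_nat_r tl[OF tensR[OF curr_beta]] tl[OF ltau_eta]
       tl[OF eta_nat_l] triangle)
  then show ?thesis using e by simp
qed

lemma Klu: "kc \<cdot> (ki \<otimes> ide K) = lu K"
proof -
  have e: "\<Lambda> (I \<odot> K) A MA (evA \<cdot> (lu K \<otimes> ide A)) = lu K" by (rule curr_eta) simp_all
  have "kc \<cdot> (ki \<otimes> ide K) = \<Lambda> (I \<odot> K) A MA (evA \<cdot> (lu K \<otimes> ide A))"
    by (simp add: kc_curr ki_curr curr_nat wmap_def assoc_nat_r tl[OF xch2[of "\<Lambda> I A MA (\<eta> A \<cdot> lu A)"]]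
       tl[OF ltau_nat1] tl[OF Mlift[OF curr_beta]] tl[OF ltau_unit] tl[OF lunit_nat_r] lunit_assoc)
  then show ?thesis using e by simp
qed

lemma ltau_mu_tl: "X \<in> Obj \<Longrightarrow> Y \<in> Obj \<Longrightarrow> h \<in> Arr \<Longrightarrow> trg h = X \<odot> MO (MO Y) \<Longrightarrow>
  \<mu> (X \<odot> Y) \<cdot> (MF (\<tau>' X Y) \<cdot> (\<tau>' X (MO Y) \<cdot> h)) = \<tau>' X Y \<cdot> ((ide X \<otimes> \<mu> Y) \<cdot> h)"
  using tl3[OF ltau_mu[symmetric], of X Y h] by simp

lemma kc_nat: "g \<in> Arr \<Longrightarrow> trg g = K \<odot> K \<Longrightarrow> kc \<cdot> g = \<Lambda> (src g) A MA (w \<cdot> (g \<otimes> ide A))"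
  unfolding kcomp_def by (simp add: curr_nat)

abbreviation "COM \<equiv> extA \<cdot> (ide K \<otimes> extA) \<cdot> \<alpha> K K MA \<cdot> (ide (K \<odot> K) \<otimes> evA) \<cdot> \<alpha> (K \<odot> K) K A"

lemma Kassoc_L: "kc \<cdot> (kc \<otimes> ide K) = \<Lambda> ((K \<odot> K) \<odot> K) A MA COM"
  by (simp add: kc_nat wmap_def assoc_nat_r tl[OF xch2[of kc]] tl[OF ltau_nat1] tl[OF Mlift[OF kc_beta]]
      tl[OF ltau_assoc] tl[OF ltau_nat_l[of "ide K" evA]] tl[OF mu_assoc] tl[OF mu_nat_r] ltau_mu_tl)

lemma Kassoc_R: "kc \<cdot> (ide K \<otimes> kc) \<cdot> \<alpha> K K K = \<Lambda> ((K \<odot> K) \<odot> K) A MA COM"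
  by (simp add: kc_nat wmap_def tl[OF assoc_nat_r] tl[OF tensR[OF kc_beta]] tl[OF assoc_nat_l[of "ide K" "ide K" evA K K "K \<odot> A"]] pentagon[symmetric])

lemma Kassoc: "kc \<cdot> (kc \<otimes> ide K) = kc \<cdot> (ide K \<otimes> kc) \<cdot> \<alpha> K K K"
  using Kassoc_L Kassoc_R by simp

abbreviation "aKu \<equiv> \<Lambda> (MO K) A MA (\<mu> A \<cdot> MF evA \<cdot> \<tau> K A)"

lemma Lin1: "aK \<cdot> MF kc \<cdot> \<tau> K K = kc \<cdot> (aK \<otimes> ide K)"
proof -
  have L: "aK \<cdot> MF kc \<cdot> \<tau> K K = \<Lambda> (MO K \<odot> K) A MA
       (\<mu> A \<cdot> MF evA \<cdot> \<mu> (K \<odot> A) \<cdot> MF (\<tau>' K A) \<cdot> \<tau> K MA \<cdot> (ide (MO K) \<otimes> evA) \<cdot> \<alpha> (MO K) K A)"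
    by (simp add: curr_nat qmap_def wmap_def tl[OF tau_nat_r] tl[OF Mlift[OF kc_beta]] tau_assoc[symmetric]
        tl[OF tau_nat_l1] tl[OF mu_assoc] tl[OF mu_nat_r])
  have R: "kc \<cdot> (aK \<otimes> ide K) = \<Lambda> (MO K \<odot> K) A MA
       (\<mu> A \<cdot> MF evA \<cdot> \<mu> (K \<odot> A) \<cdot> MF (\<tau>' K A) \<cdot> \<tau> K MA \<cdot> (ide (MO K) \<otimes> evA) \<cdot> \<alpha> (MO K) K A)"
    by (simp add: kc_nat qmap_def wmap_def assoc_nat_r tl[OF xch2[of aKu]] tl[OF ltau_nat1]
        tl[OF Mlift[OF curr_beta]] tl[OF mu_assoc] tl[OF mu_nat_r] tl3[OF comm])
  from L R show ?thesis by simp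
qed

lemma Lin2: "aK \<cdot> MF kc \<cdot> \<tau>' K K = kc \<cdot> (ide K \<otimes> aK)"
proof -
  have L: "aK \<cdot> MF kc \<cdot> \<tau>' K K = \<Lambda> (K \<odot> MO K) A MA
       (\<mu> A \<cdot> MF evA \<cdot> \<tau>' K A \<cdot> (ide K \<otimes> \<mu> A) \<cdot> (ide K \<otimes> MF evA) \<cdot> (ide K \<otimes> \<tau> K A) \<cdot> \<alpha> K (MO K) A)"
    by (simp add: curr_nat qmap_def wmap_def tl[OF tau_nat_r] tl[OF Mlift[OF kc_beta]] mixed_assoc
        tl[OF ltau_nat_l[of "ide K" evA]] tl[OF mu_assoc] tl[OF mu_nat_r] ltau_mu_tl)
  have R: "kc \<cdot> (ide K \<otimes> aK) = \<Lambda> (K \<odot> MO K) A MA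
       (\<mu> A \<cdot> MF evA \<cdot> \<tau>' K A \<cdot> (ide K \<otimes> \<mu> A) \<cdot> (ide K \<otimes> MF evA) \<cdot> (ide K \<otimes> \<tau> K A) \<cdot> \<alpha> K (MO K) A)"
    by (simp add: kc_nat qmap_def wmap_def assoc_nat_r tl[OF tensR[OF curr_beta]])
  from L R show ?thesis by simp
qed

lemma Kcompat: "aK \<cdot> MF kc \<cdot> \<mu> (K \<odot> K) \<cdot> MF (\<tau>' K K) \<cdot> \<tau> K (MO K) = kc \<cdot> (aK \<otimes> aK)"
proof -
  have "kc \<cdot> (aK \<otimes> aK) = kc \<cdot> ((aK \<otimes> ide K) \<cdot> (ide (MO K) \<otimes> aK))"
    by (simp add: tar_cmp[symmetric])
  also have "\<dots> = aK \<cdot> MF kc \<cdot> \<mu> (K \<odot> K) \<cdot> MF (\<tau>' K K) \<cdot> \<tau> K (MO K)"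
    by (simp add: tl[OF Lin1[symmetric]] tau_nat_r1 tl[OF Mlift[OF Lin2[symmetric]]] tl[OF Kalg2] tl[OF mu_nat_r])
  finally show ?thesis by simp
qed


lemma Ksym: "sym_em_monoid C M K aK kc ki"
  unfolding sym_em_monoid_def hom_iff
  using Kalg1 Kalg2 Kassoc Klu Kru Kcompat by simp

lemma Khom: "sym_em_monoid_hom C M MA (\<mu> A) m u K aK kc ki lsA"
  unfolding sym_em_monoid_hom_def hom_iff
  using emm Ksym E1 E2 E3 by simp

lemma Ksplit: "\<exists>r \<in> hom C K MA. r \<cdot> lsA = ide MA"
proof
  show "(extA \<cdot> (ide K \<otimes> u) \<cdot> ru' K) \<cdot> lsA = ide MA" by (rule split)
  show "extA \<cdot> (ide K \<otimes> u) \<cdot> ru' K \<in> hom C K MA" by (simp add: hom_iff)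
qed

end

theorem theorem22:
  fixes C :: "('o, 'm) smcc" and M :: "('o, 'm) smonad"
    and A :: 'o and m u :: 'm
  assumes "symmetric_closed_monoidal C"
    and "commutative_monad C M"
    and "A \<in> Ob C"
    and "sym_em_monoid C M (Mo M A) (mu M A) m u"
  shows "sym_em_monoid_hom C M (Mo M A) (mu M A) m u
           (KA C M A) (curr C (Mo M (KA C M A)) A (Mo M A) (qmap C M A)) (kcomp C M A) (kident C M A)
           (curr C (Mo M A) A (Mo M A) (cmp C m (tar C (idm C (Mo M A)) (eta M A))))
       \<and> (\<exists>r \<in> hom C (KA C M A) (Mo M A).
            cmp C r (curr C (Mo M A) A (Mo M A) (cmp C m (tar C (idm C (Mo M A)) (eta M A))))
              = idm C (Mo M A))"
proof -
  interpret SMCA C M A m u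
    by (unfold_locales) (use assms in auto)
  show ?thesis using Khom Ksplit by blast
qed


end
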